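(* Let $H,H_0$ be selfadjoint nonnegative operators in a separable Hilbert space such that $e^{-tH}-e^{-tH_0}$ is trace class for all $t>0$, and suppose (1) as $t\to0^+$, $\mathrm{Tr}(e^{-tH}-e^{-tH_0})\sim\sum_{j\ge0}a_jt^{\alpha_j}$ with $-\infty<\alpha_0<\alpha_1<\cdots$, $\alpha_j\to\infty$; (2) there are $b_0\in\mathbb{C}$, $\rho>0$ with $\mathrm{Tr}(e^{-tH}-e^{-tH_0})=b_0+O(t^{-\rho})$ as $t\to\infty$. Then as $\lambda\to0^+$, $$\log\det(H+\lambda,H_0+\lambda)=b_0\log\lambda+\log\det(H,H_0)+o(1).$$
   Context: Relative zeta function: $\zeta_1(s,H,H_0)=\frac{1}{\Gamma(s)}\int_0^1t^{s-1}\mathrm{Tr}(e^{-tH}-e^{-tH_0})dt$ (for $\mathrm{Re}\,s>-\alpha_0$, meromorphically continued to $\mathbb{C}$), $\zeta_2(s,H,H_0)=\frac{1}{\Gamma(s)}\int_1^\infty t^{s-1}\mathrm{Tr}(e^{-tH}-e^{-tH_0})dt$ (for $\mathrm{Re}\,s<0$), continued to $\mathrm{Re}\,s<\rho$ by $\zeta_2(s,H,H_0)=-\frac{b_0}{\Gamma(s+1)}+\frac{1}{\Gamma(s)}\int_1^\infty t^{s-1}(\mathrm{Tr}(e^{-tH}-e^{-tH_0})-b_0)dt$; both are holomorphic at $s=0$. $\zeta(s,H,H_0)=\zeta_1+\zeta_2$ and $\det(H,H_0)=\exp(-\frac{d}{ds}\zeta(s,H,H_0)|_{s=0})$. For $\lambda>0$,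 $\det(H+\lambda,H_0+\lambda)$ is defined in the same way with $H,H_0$ replaced by $H+\lambda,H_0+\lambda$. *)

theory Defs
  imports "HOL-Analysis.Analysis" "HOL-Complex_Analysis.Complex_Analysis" "HOL-Library.Landau_Symbols"
begin

text \<open>The relative heat trace theta(t) = Tr(e^{-tH} - e^{-tH_0}) enters only as a function of t > 0.\<close>

definition zeta1 :: "(real \<Rightarrow> complex) \<Rightarrow> real \<Rightarrow> complex \<Rightarrow> complex" where
  "zeta1 \<theta> \<alpha>0 = (SOME f. f meromorphic_on UNIV \<and>
     (\<forall>s. Re s > - \<alpha>0 \<longrightarrow>
        f s = rGamma s * integral {0..1} (\<lambda>t. complex_of_real t powr (s - 1) * \<theta> t)))"

text \<open>zeta_2 in its continued form, valid for Re s < rho.\<close>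
definition zeta2 :: "(real \<Rightarrow> complex) \<Rightarrow> complex \<Rightarrow> complex \<Rightarrow> complex" where
  "zeta2 \<theta> b0 s = - b0 * rGamma (s + 1)
     + rGamma s * integral {1..} (\<lambda>t. complex_of_real t powr (s - 1) * (\<theta> t - b0))"

text \<open>log det = - zeta'(0), zeta = zeta_1 + zeta_2 (zeta_1 taken with its removable singularity at 0 removed).\<close>
definition logdet :: "(real \<Rightarrow> complex) \<Rightarrow> real \<Rightarrow> complex \<Rightarrow> complex" where
  "logdet \<theta> \<alpha>0 b0 = - (deriv (remove_sings (zeta1 \<theta> \<alpha>0)) 0 + deriv (zeta2 \<theta> b0) 0)"

end

theory Submission
  imports Defs
begin

lemma integrable_bound_Ioo:
  fixes g :: "real \<Rightarrow> complex" and h :: "real \<Rightarrow> real"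
  assumes cont: "continuous_on {a<..<b} g"
    and bnd: "\<And>t. t \<in> {a<..<b} \<Longrightarrow> norm (g t) \<le> h t"
    and hint: "h integrable_on {a..b}"
  shows "g integrable_on {a..b}" "norm (integral {a..b} g) \<le> integral {a..b} h"
proof -
  have hint': "h integrable_on {a<..<b}" using hint integrable_on_Icc_iff_Ioo by blast
  have meas: "g \<in> borel_measurable (lebesgue_on {a<..<b})"
    by (rule continuous_imp_measurable_on_sets_lebesgue[OF cont]) auto
  have gi: "g integrable_on {a<..<b}"
    by (rule measurable_bounded_by_integrable_imp_integrable[OF meas hint' bnd]) auto
  then show "g integrable_on {a..b}" using integrable_on_Icc_iff_Ioo by blast
  have "norm (integral {a<..<b} g) \<le> integral {a<..<b} h"
    by (rule integral_norm_bound_integral[OF gi hint' bnd])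
  then show "norm (integral {a..b} g) \<le> integral {a..b} h"
    by (simp add: integral_open_interval_real)
qed

lemma integrable_bound_Ioi:
  fixes g :: "real \<Rightarrow> complex" and h :: "real \<Rightarrow> real"
  assumes cont: "continuous_on {a<..} g"
    and bnd: "\<And>t. t \<in> {a<..} \<Longrightarrow> norm (g t) \<le> h t"
    and hint: "h integrable_on {a..}"
  shows "g integrable_on {a..}" "norm (integral {a..} g) \<le> integral {a..} h"
proof -
  have eq: "{a..} = insert a {a<..}" by auto
  have hint': "h integrable_on {a<..}" using hint eq integrable_on_insert_iff by metis
  have meas: "g \<in> borel_measurable (lebesgue_on {a<..})"
    by (rule continuous_imp_measurable_on_sets_lebesgue[OF cont]) auto
  have gi: "g integrable_on {a<..}"
    by (rule measurable_bounded_by_integrable_imp_integrable[OF meas hint' bnd]) auto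
  then show "g integrable_on {a..}" using eq integrable_on_insert_iff by metis
  have "norm (integral {a<..} g) \<le> integral {a<..} h"
    by (rule integral_norm_bound_integral[OF gi hint' bnd])
  moreover have "integral {a<..} g = integral {a..} g"
    by (rule integral_spike_set) (auto intro: negligible_subset[of "{a}"])
  moreover have "integral {a<..} h = integral {a..} h"
    by (rule integral_spike_set) (auto intro: negligible_subset[of "{a}"])
  ultimately show "norm (integral {a..} g) \<le> integral {a..} h" by simp
qed

lemma cpowr_norm: "t > 0 \<Longrightarrow> norm (complex_of_real t powr s) = t powr Re s"
  by (simp add: norm_powr_real_powr)

lemma cpowr_cont: "continuous_on {0<..} (\<lambda>t::real. complex_of_real t powr s)"
  by (intro continuous_on_powr_complex continuous_intros) auto

lemma mellin01_bound:
  fixes R :: "real \<Rightarrow> complex"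
  assumes cont: "continuous_on {0<..1} R"
    and bnd: "\<And>t. 0 < t \<Longrightarrow> t \<le> 1 \<Longrightarrow> norm (R t) \<le> C * t powr \<mu>"
    and pos: "Re s + \<mu> > 0" and e: "0 \<le> e" "e \<le> 1"
  shows "(\<lambda>t. of_real t powr (s - 1) * R t) integrable_on {0..e}"
    and "norm (integral {0..e} (\<lambda>t. of_real t powr (s - 1) * R t)) \<le> C * (e powr (Re s + \<mu>) / (Re s + \<mu>))"
proof -
  have c1: "continuous_on {0<..<e} (\<lambda>t. of_real t powr (s - 1) * R t)"
  proof (intro continuous_on_mult)
    show "continuous_on {0<..<e} (\<lambda>t. complex_of_real t powr (s - 1))"
      by (rule continuous_on_subset[OF cpowr_cont]) auto
    show "continuous_on {0<..<e} R" by (rule continuous_on_subset[OF cont]) (use e in auto)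
  qed
  have b1: "norm (of_real t powr (s - 1) * R t) \<le> C * t powr (Re s + \<mu> - 1)" if "t \<in> {0<..<e}" for t
  proof -
    have t: "0 < t" "t \<le> 1" using that e by auto
    have "norm (of_real t powr (s - 1) * R t) = t powr (Re s - 1) * norm (R t)"
      using t by (simp add: norm_mult cpowr_norm)
    also have "\<dots> \<le> t powr (Re s - 1) * (C * t powr \<mu>)"
      by (intro mult_left_mono bnd t) simp
    also have "\<dots> = C * t powr (Re s + \<mu> - 1)"
      by (simp add: powr_add[symmetric] algebra_simps)
    finally show ?thesis .
  qed
  have hi: "((\<lambda>t. C * t powr (Re s + \<mu> - 1)) has_integral C * (e powr (Re s + \<mu>) / (Re s + \<mu>))) {0..e}"
    using has_integral_mult_right[OF has_integral_powr_from_0[of "Re s + \<mu> - 1" e]] pos e by simp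
  have hint: "(\<lambda>t. C * t powr (Re s + \<mu> - 1)) integrable_on {0..e}"
    using hi by (rule has_integral_integrable)
  have hval: "integral {0..e} (\<lambda>t. C * t powr (Re s + \<mu> - 1)) = C * (e powr (Re s + \<mu>) / (Re s + \<mu>))"
    using hi by (rule integral_unique)
  show "(\<lambda>t. of_real t powr (s - 1) * R t) integrable_on {0..e}"
    by (rule integrable_bound_Ioo(1)[OF c1 _ hint]) (erule b1)
  show "norm (integral {0..e} (\<lambda>t. of_real t powr (s - 1) * R t)) \<le> C * (e powr (Re s + \<mu>) / (Re s + \<mu>))"
    using integrable_bound_Ioo(2)[OF c1 _ hint] b1 unfolding hval by blast
qed

lemma mellin_cont_aux:
  assumes cont: "continuous_on A R" and a: "\<And>t. t \<in> A \<Longrightarrow> t > 0"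
  shows "continuous_on (UNIV \<times> A) (\<lambda>(s, t). Ln (of_real t) * of_real t powr (s - 1) * R t)"
proof -
  have "continuous_on (UNIV \<times> A) (\<lambda>p. Ln (of_real (snd p)) * of_real (snd p) powr (fst p - 1) * R (snd p))"
  proof (intro continuous_intros continuous_on_powr_complex continuous_on_compose2[OF cont])
  qed (use a in \<open>force simp: nonpos_Reals_def\<close>)+
  then show ?thesis by (simp add: case_prod_unfold)
qed

lemma mellin_deriv_aux:
  "t > 0 \<Longrightarrow> ((\<lambda>s. of_real t powr (s - 1) * R t) has_field_derivative (Ln (of_real t) * of_real t powr (s-1) * R t)) (at s within U)"
  by (auto intro!: derivative_eq_intros DERIV_chain2[OF has_field_derivative_powr_right])

lemma mellin_segment_holo:
  assumes cont: "continuous_on {a..b} R" and a: "a > 0"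
  shows "(\<lambda>s. integral {a..b} (\<lambda>t. of_real t powr (s - 1) * R t)) holomorphic_on UNIV"
proof -
  have "(\<lambda>s. integral (cbox a b) (\<lambda>t. of_real t powr (s - 1) * R t)) holomorphic_on UNIV"
  proof (rule leibniz_rule_holomorphic)
    fix s t assume "t \<in> cbox a b"
    then show "((\<lambda>s. of_real t powr (s - 1) * R t) has_field_derivative (Ln (of_real t) * of_real t powr (s-1) * R t)) (at s within UNIV)"
      using a by (intro mellin_deriv_aux) auto
  next
    fix s :: complex
    show "(\<lambda>t. of_real t powr (s - 1) * R t) integrable_on cbox a b"
    proof (rule integrable_continuous)
      show "continuous_on (cbox a b) (\<lambda>t. of_real t powr (s - 1) * R t)"
        unfolding cbox_interval
        by (intro continuous_on_mult cont continuous_on_subset[OF cpowr_cont]) (use a in auto)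
    qed
  next
    show "continuous_on (UNIV \<times> cbox a b) (\<lambda>(s, t). Ln (of_real t) * of_real t powr (s - 1) * R t)"
      using mellin_cont_aux[OF cont] a by auto
  qed auto
  then show ?thesis by simp
qed

lemma inverse_plus2_lim: "(\<lambda>n. inverse (real n + 2)) \<longlonglongrightarrow> 0"
proof -
  have "filterlim (\<lambda>n. 2 + real n) at_top sequentially"
    by (rule filterlim_tendsto_add_at_top[OF tendsto_const filterlim_real_sequentially])
  then show ?thesis by (intro tendsto_inverse_0_at_top) (simp add: add.commute)
qed

lemma mellin01_holo:
  fixes R :: "real \<Rightarrow> complex"
  assumes cont: "continuous_on {0<..1} R"
    and bnd: "\<And>t. 0 < t \<Longrightarrow> t \<le> 1 \<Longrightarrow> norm (R t) \<le> C * t powr \<mu>"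
  shows "(\<lambda>s. integral {0..1} (\<lambda>t. of_real t powr (s - 1) * R t)) holomorphic_on {s. Re s > -\<mu>}"
proof -
  define G where "G = (\<lambda>s. integral {0..1} (\<lambda>t. of_real t powr (s - 1) * R t))"
  define \<epsilon> where "\<epsilon> = (\<lambda>n::nat. inverse (real n + 2))"
  define F where "F = (\<lambda>n s. integral {\<epsilon> n..1} (\<lambda>t. of_real t powr (s - 1) * R t))"
  have eps: "0 < \<epsilon> n" "\<epsilon> n \<le> 1" for n unfolding \<epsilon>_def by (auto simp: inverse_le_1_iff)
  have "norm (R 1) \<le> C" using bnd[of 1] by simp
  then have C0: "C \<ge> 0" using norm_ge_zero order_trans by blast
  have "G holomorphic_on {s. Re s > -\<mu>}"
  proof (rule holomorphic_uniform_sequence[where f = F])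
    show "open {s. Re s > -\<mu>}" by (simp add: open_halfspace_Re_gt)
    show "F n holomorphic_on {s. - \<mu> < Re s}" for n
      unfolding F_def
      by (rule holomorphic_on_subset[OF mellin_segment_holo]) (use eps[of n] in \<open>auto intro: continuous_on_subset[OF cont]\<close>)
  next
    fix x assume x: "x \<in> {s. - \<mu> < Re s}"
    define d where "d = (Re x + \<mu>) / 2"
    have d: "d > 0" using x by (simp add: d_def)
    have sub: "cball x d \<subseteq> {s. - \<mu> < Re s}"
    proof
      fix s assume "s \<in> cball x d"
      then have "\<bar>Re x - Re s\<bar> \<le> d" using abs_Re_le_cmod[of "x - s"] by (auto simp: dist_norm)
      then have "Re x - Re s \<le> d" by (rule abs_le_D1)
      then show "s \<in> {s. - \<mu> < Re s}" using d unfolding d_def by simp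
    qed
    have Rs: "Re s + \<mu> \<ge> d" if "s \<in> cball x d" for s
    proof -
      have "\<bar>Re x - Re s\<bar> \<le> d" using that abs_Re_le_cmod[of "x - s"] by (auto simp: dist_norm)
      then have "Re x - Re s \<le> d" by (rule abs_le_D1)
      then show ?thesis unfolding d_def by simp
    qed
    have lim: "(\<lambda>n. C * (\<epsilon> n powr d / d)) \<longlonglongrightarrow> C * (0 powr d / d)"
      unfolding \<epsilon>_def using d
      by (intro tendsto_intros inverse_plus2_lim) auto
    have "uniform_limit (cball x d) F G sequentially"
      unfolding uniform_limit_iff
    proof (intro allI impI)
      fix e :: real assume e: "e > 0"
      have "eventually (\<lambda>n. C * (\<epsilon> n powr d / d) < e) sequentially"
        using order_tendstoD(2)[OF lim] e d by simp
      then show "\<forall>\<^sub>F n in sequentially. \<forall>s\<in>cball x d. dist (F n s) (G s) < e"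
      proof eventually_elim
        case (elim n)
        show ?case
        proof
          fix s assume s: "s \<in> cball x d"
          have pos: "Re s + \<mu> > 0" using Rs[OF s] d by simp
          have int1: "(\<lambda>t. of_real t powr (s - 1) * R t) integrable_on {0..1}"
            by (rule mellin01_bound(1)[OF cont bnd pos]) auto
          have "integral {0..\<epsilon> n} (\<lambda>t. of_real t powr (s - 1) * R t) + F n s = G s"
            unfolding F_def G_def by (rule Henstock_Kurzweil_Integration.integral_combine) (use eps[of n] int1 in auto)
          then have "F n s - G s = - integral {0..\<epsilon> n} (\<lambda>t. of_real t powr (s - 1) * R t)"
            by (simp add: algebra_simps)
          then have "dist (F n s) (G s) = norm (integral {0..\<epsilon> n} (\<lambda>t. of_real t powr (s - 1) * R t))"
            by (simp add: dist_norm)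
          also have "\<dots> \<le> C * (\<epsilon> n powr (Re s + \<mu>) / (Re s + \<mu>))"
            by (rule mellin01_bound(2)[OF cont bnd pos]) (use eps[of n] in auto)
          also have "\<dots> \<le> C * (\<epsilon> n powr d / d)"
          proof (intro mult_left_mono C0 frac_le)
            show "\<epsilon> n powr (Re s + \<mu>) \<le> \<epsilon> n powr d"
              using powr_mono'[of d "Re s + \<mu>" "\<epsilon> n"] Rs[OF s] eps[of n] by simp
          qed (use d Rs[OF s] in auto)
          also have "\<dots> < e" by (rule elim)
          finally show "dist (F n s) (G s) < e" .
        qed
      qed
    qed
    then show "\<exists>d>0. cball x d \<subseteq> {s. - \<mu> < Re s} \<and> uniform_limit (cball x d) F G sequentially"
      using d sub by blast
  qed
  then show ?thesis unfolding G_def .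
qed


lemma mellin1inf_bound:
  fixes R :: "real \<Rightarrow> complex"
  assumes cont: "continuous_on {1..} R"
    and bnd: "\<And>t. 1 \<le> t \<Longrightarrow> norm (R t) \<le> C * t powr (-\<rho>)"
    and pos: "Re s < \<rho>" and T: "1 \<le> T"
  shows "(\<lambda>t. of_real t powr (s - 1) * R t) integrable_on {T..}"
    and "norm (integral {T..} (\<lambda>t. of_real t powr (s - 1) * R t)) \<le> C * (T powr (Re s - \<rho>) / (\<rho> - Re s))"
proof -
  have c1: "continuous_on {T<..} (\<lambda>t. of_real t powr (s - 1) * R t)"
  proof (intro continuous_on_mult)
    show "continuous_on {T<..} (\<lambda>t. complex_of_real t powr (s - 1))"
      by (rule continuous_on_subset[OF cpowr_cont]) (use T in auto)
    show "continuous_on {T<..} R" by (rule continuous_on_subset[OF cont]) (use T in auto)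
  qed
  have b1: "norm (of_real t powr (s - 1) * R t) \<le> C * t powr (Re s - \<rho> - 1)" if "t \<in> {T<..}" for t
  proof -
    have t: "0 < t" "1 \<le> t" using that T by auto
    have "norm (of_real t powr (s - 1) * R t) = t powr (Re s - 1) * norm (R t)"
      using t by (simp add: norm_mult cpowr_norm)
    also have "\<dots> \<le> t powr (Re s - 1) * (C * t powr (-\<rho>))"
      by (intro mult_left_mono bnd t) simp
    also have "\<dots> = C * t powr (Re s - \<rho> - 1)"
      by (simp add: powr_add[symmetric] algebra_simps)
    finally show ?thesis .
  qed
  have hi0: "((\<lambda>t. t powr (Re s - \<rho> - 1)) has_integral -(T powr (Re s - \<rho> - 1 + 1)) / (Re s - \<rho> - 1 + 1)) {T..}"
    by (rule has_integral_powr_to_inf) (use pos T in auto)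
  have hi: "((\<lambda>t. C * t powr (Re s - \<rho> - 1)) has_integral C * (T powr (Re s - \<rho>) / (\<rho> - Re s))) {T..}"
    using has_integral_mult_right[OF hi0, of C] pos by (simp add: minus_divide_right)
  have hint: "(\<lambda>t. C * t powr (Re s - \<rho> - 1)) integrable_on {T..}"
    using hi by (rule has_integral_integrable)
  have hval: "integral {T..} (\<lambda>t. C * t powr (Re s - \<rho> - 1)) = C * (T powr (Re s - \<rho>) / (\<rho> - Re s))"
    using hi by (rule integral_unique)
  show "(\<lambda>t. of_real t powr (s - 1) * R t) integrable_on {T..}"
    by (rule integrable_bound_Ioi(1)[OF c1 _ hint]) (erule b1)
  show "norm (integral {T..} (\<lambda>t. of_real t powr (s - 1) * R t)) \<le> C * (T powr (Re s - \<rho>) / (\<rho> - Re s))"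
    using integrable_bound_Ioi(2)[OF c1 _ hint] b1 unfolding hval by blast
qed

lemma integral_split_Ici:
  fixes f :: "real \<Rightarrow> complex"
  assumes "f integrable_on {a..b}" "f integrable_on {b..}" "a \<le> b"
  shows "integral {a..} f = integral {a..b} f + integral {b..} f"
proof -
  have "(f has_integral (integral {a..b} f + integral {b..} f)) ({a..b} \<union> {b..})"
    by (rule has_integral_Un) (use assms in \<open>auto intro: negligible_subset[of "{b}"]\<close>)
  moreover have "{a..b} \<union> {b..} = {a..}" using assms(3) by auto
  ultimately show ?thesis by (simp add: integral_unique)
qed

lemma mellin1inf_holo:
  fixes R :: "real \<Rightarrow> complex"
  assumes cont: "continuous_on {1..} R"
    and bnd: "\<And>t. 1 \<le> t \<Longrightarrow> norm (R t) \<le> C * t powr (-\<rho>)"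
  shows "(\<lambda>s. integral {1..} (\<lambda>t. of_real t powr (s - 1) * R t)) holomorphic_on {s. Re s < \<rho>}"
proof -
  define G where "G = (\<lambda>s. integral {1..} (\<lambda>t. of_real t powr (s - 1) * R t))"
  define T where "T = (\<lambda>n::nat. real n + 2)"
  define F where "F = (\<lambda>n s. integral {1..T n} (\<lambda>t. of_real t powr (s - 1) * R t))"
  have Tn: "1 \<le> T n" for n unfolding T_def by auto
  have "norm (R 1) \<le> C" using bnd[of 1] by simp
  then have C0: "C \<ge> 0" using norm_ge_zero order_trans by blast
  have "G holomorphic_on {s. Re s < \<rho>}"
  proof (rule holomorphic_uniform_sequence[where f = F])
    show "open {s. Re s < \<rho>}" by (simp add: open_halfspace_Re_lt)
    show "F n holomorphic_on {s. Re s < \<rho>}" for n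
      unfolding F_def
      by (rule holomorphic_on_subset[OF mellin_segment_holo]) (use Tn[of n] in \<open>auto intro: continuous_on_subset[OF cont]\<close>)
  next
    fix x assume x: "x \<in> {s. Re s < \<rho>}"
    define d where "d = (\<rho> - Re x) / 2"
    have d: "d > 0" using x by (simp add: d_def)
    have Rs: "\<rho> - Re s \<ge> d" if "s \<in> cball x d" for s
    proof -
      have "\<bar>Re s - Re x\<bar> \<le> d" using that abs_Re_le_cmod[of "s - x"] by (auto simp: dist_norm norm_minus_commute)
      then have "Re s - Re x \<le> d" by (rule abs_le_D1)
      then show ?thesis unfolding d_def by simp
    qed
    have sub: "cball x d \<subseteq> {s. Re s < \<rho>}"
      using Rs d by fastforce
    have lim0: "filterlim T at_top sequentially"
      unfolding T_def
      by (rule filterlim_tendsto_add_at_top[OF tendsto_const filterlim_real_sequentially, THEN filterlim_cong[THEN iffD1, rotated 3]]) (auto simp: add.commute)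
    have lim: "(\<lambda>n. C * (T n powr (-d) / d)) \<longlonglongrightarrow> C * (0 / d)"
      using d by (intro tendsto_intros tendsto_neg_powr lim0) auto
    have "uniform_limit (cball x d) F G sequentially"
      unfolding uniform_limit_iff
    proof (intro allI impI)
      fix e :: real assume e: "e > 0"
      have "eventually (\<lambda>n. C * (T n powr (-d) / d) < e) sequentially"
        using order_tendstoD(2)[OF lim] e d by simp
      then show "\<forall>\<^sub>F n in sequentially. \<forall>s\<in>cball x d. dist (F n s) (G s) < e"
      proof eventually_elim
        case (elim n)
        show ?case
        proof
          fix s assume s: "s \<in> cball x d"
          have pos: "Re s < \<rho>" using Rs[OF s] d by simp
          have int1: "(\<lambda>t. of_real t powr (s - 1) * R t) integrable_on {T n..}"
            by (rule mellin1inf_bound(1)[OF cont bnd pos Tn])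
          have int2: "(\<lambda>t. of_real t powr (s - 1) * R t) integrable_on {1..T n}"
            by (rule integrable_continuous_interval, intro continuous_on_mult continuous_on_subset[OF cpowr_cont] continuous_on_subset[OF cont]) auto
          have "G s = F n s + integral {T n..} (\<lambda>t. of_real t powr (s - 1) * R t)"
            unfolding F_def G_def by (rule integral_split_Ici[OF int2 int1 Tn])
          then have "F n s - G s = - integral {T n..} (\<lambda>t. of_real t powr (s - 1) * R t)"
            by (simp add: algebra_simps)
          then have "dist (F n s) (G s) = norm (integral {T n..} (\<lambda>t. of_real t powr (s - 1) * R t))"
            by (simp add: dist_norm)
          also have "\<dots> \<le> C * (T n powr (Re s - \<rho>) / (\<rho> - Re s))"
            by (rule mellin1inf_bound(2)[OF cont bnd pos Tn])
          also have "\<dots> \<le> C * (T n powr (-d) / d)"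
          proof (intro mult_left_mono C0 frac_le)
            show "T n powr (Re s - \<rho>) \<le> T n powr (-d)"
              using Rs[OF s] Tn[of n] by (intro powr_mono) auto
          qed (use d Rs[OF s] in auto)
          also have "\<dots> < e" by (rule elim)
          finally show "dist (F n s) (G s) < e" .
        qed
      qed
    qed
    then show "\<exists>d>0. cball x d \<subseteq> {s. Re s < \<rho>} \<and> uniform_limit (cball x d) F G sequentially"
      using d sub by blast
  qed
  then show ?thesis unfolding G_def .
qed

lemma cpowr_pos_eq: "t > 0 \<Longrightarrow> complex_of_real t powr a = exp (a * of_real (ln t))"
  by (simp add: powr_def Ln_of_real)

lemma cpowr_add: "t > 0 \<Longrightarrow> complex_of_real t powr (a + b) = complex_of_real t powr a * complex_of_real t powr b"
  by (simp add: cpowr_pos_eq exp_add[symmetric] algebra_simps)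

lemma cpowr_mult_real: "t > 0 \<Longrightarrow> complex_of_real t powr a * of_real (t powr b) = complex_of_real t powr (a + of_real b)"
proof -
  assume t: "t > 0"
  then have "of_real (t powr b) = complex_of_real t powr of_real b" by (simp add: powr_of_real)
  then show ?thesis using t by (simp add: cpowr_add)
qed

lemma zero_by_bound_lim:
  fixes D :: complex
  assumes a: "a > 0" and b: "\<And>e. 0 < e \<Longrightarrow> e \<le> 1 \<Longrightarrow> norm D \<le> K * e powr a"
  shows "D = 0"
proof -
  define \<epsilon> where "\<epsilon> = (\<lambda>n::nat. inverse (real n + 2))"
  have eps: "0 < \<epsilon> n" "\<epsilon> n \<le> 1" for n unfolding \<epsilon>_def by (auto simp: inverse_le_1_iff)
  have lim: "(\<lambda>n. K * \<epsilon> n powr a) \<longlonglongrightarrow> K * 0 powr a"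
    unfolding \<epsilon>_def using a by (intro tendsto_intros inverse_plus2_lim) auto
  have "norm D \<le> K * 0 powr a"
    by (rule tendsto_le[OF trivial_limit_sequentially lim tendsto_const]) (use b eps in auto)
  then show ?thesis by simp
qed

lemma mellin_power_FTC:
  assumes z: "Re z > 0" and e: "0 < e" "e \<le> 1"
  shows "((\<lambda>t. of_real t powr (z - 1)) has_integral (1 - of_real e powr z) / z) {e..1}"
proof -
  have z0: "z \<noteq> 0" using z by auto
  have "((\<lambda>t. of_real t powr (z - 1)) has_integral (of_real 1 powr z / z - of_real e powr z / z)) {e..1}"
  proof (rule fundamental_theorem_of_calculus)
    show "e \<le> 1" by fact
    fix x assume x: "x \<in> {e..1}"
    then have x0: "x > 0" using e by auto
    have "((\<lambda>w. w powr z / z) has_field_derivative (z * of_real x powr (z - 1) / z)) (at (of_real x))"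
      by (intro derivative_eq_intros has_field_derivative_powr) (use x0 z0 in \<open>auto simp: nonpos_Reals_def\<close>)
    then have "((\<lambda>t. of_real t powr z / z) has_vector_derivative (z * of_real x powr (z - 1) / z)) (at x within {e..1})"
      by (rule has_vector_derivative_real_field)
    then show "((\<lambda>t. of_real t powr z / z) has_vector_derivative of_real x powr (z - 1)) (at x within {e..1})"
      using z0 by simp
  qed
  then show ?thesis by (simp add: diff_divide_distrib)
qed

lemma mellin_power:
  assumes z: "Re z > 0"
  shows "((\<lambda>t. of_real t powr (z - 1)) has_integral 1 / z) {0..1}"
proof -
  have cont1: "continuous_on {0<..1} (\<lambda>t. 1::complex)" by simp
  have bnd1: "norm (1::complex) \<le> 1 * t powr 0" if "0 < t" for t using that by simp
  have int: "(\<lambda>t. of_real t powr (z - 1)) integrable_on {0..1}"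
    using mellin01_bound(1)[OF cont1 bnd1, of z 1] z by simp
  have "integral {0..1} (\<lambda>t. of_real t powr (z - 1)) - 1 / z = 0"
  proof (rule zero_by_bound_lim[where a = "Re z" and K = "1 / Re z + 1 / norm z"])
    show "Re z > 0" by fact
    fix e :: real assume e: "0 < e" "e \<le> 1"
    have "integral {0..e} (\<lambda>t. of_real t powr (z - 1)) + integral {e..1} (\<lambda>t. of_real t powr (z - 1))
          = integral {0..1} (\<lambda>t. of_real t powr (z - 1))"
      by (rule Henstock_Kurzweil_Integration.integral_combine) (use e int in auto)
    moreover have "integral {e..1} (\<lambda>t. of_real t powr (z - 1)) = (1 - of_real e powr z) / z"
      using mellin_power_FTC[OF z e] by (rule integral_unique)
    ultimately have i1: "integral {0..1} (\<lambda>t. of_real t powr (z - 1))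
        = integral {0..e} (\<lambda>t. of_real t powr (z - 1)) + (1 - of_real e powr z) / z"
      by simp
    have eq: "integral {0..1} (\<lambda>t. of_real t powr (z - 1)) - 1 / z
        = integral {0..e} (\<lambda>t. of_real t powr (z - 1)) - of_real e powr z / z"
      unfolding i1 by (simp add: diff_divide_distrib)
    have n1: "norm (integral {0..e} (\<lambda>t. of_real t powr (z - 1))) \<le> 1 * (e powr (Re z + 0) / (Re z + 0))"
      using mellin01_bound(2)[OF cont1 bnd1, of z e] z e by simp
    have n2: "norm (of_real e powr z / z) = e powr Re z / norm z"
      using e by (simp add: norm_divide cpowr_norm)
    have "norm (integral {0..1} (\<lambda>t. of_real t powr (z - 1)) - 1 / z)
        \<le> norm (integral {0..e} (\<lambda>t. of_real t powr (z - 1))) + norm (of_real e powr z / z)"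
      unfolding eq by (rule norm_triangle_ineq4)
    also have "\<dots> \<le> e powr Re z / Re z + e powr Re z / norm z"
      using n1 n2 by simp
    also have "\<dots> = (1 / Re z + 1 / norm z) * e powr Re z"
      by (simp add: algebra_simps)
    finally show "norm (integral {0..1} (\<lambda>t. of_real t powr (z - 1)) - 1 / z) \<le> (1 / Re z + 1 / norm z) * e powr Re z" .
  qed
  then show ?thesis using int by (simp add: has_integral_integrable_integral)
qed

lemma mellin_power_real:
  assumes z: "Re s + \<beta> > 0"
  shows "((\<lambda>t. of_real t powr (s - 1) * of_real (t powr \<beta>)) has_integral 1 / (s + of_real \<beta>)) {0..1}"
proof -
  have "((\<lambda>t. of_real t powr ((s + of_real \<beta>) - 1)) has_integral 1 / (s + of_real \<beta>)) {0..1}"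
    by (rule mellin_power) (use z in simp)
  then show ?thesis
  proof (rule has_integral_spike[of "{0}", rotated 2])
    fix t :: real assume "t \<in> {0..1} - {0}"
    then have "t > 0" by force
    then have "of_real t powr (s - 1) * of_real (t powr \<beta>) = of_real t powr ((s - 1) + of_real \<beta>)"
      by (rule cpowr_mult_real)
    then show "of_real t powr (s - 1) * of_real (t powr \<beta>) = of_real t powr ((s + of_real \<beta>) - 1)"
      by (simp add: algebra_simps)
  qed auto
qed

definition psum :: "(complex \<times> real) list \<Rightarrow> real \<Rightarrow> complex" where
  "psum xs t = (\<Sum>p\<leftarrow>xs. fst p * of_real (t powr snd p))"

definition Tm :: "real \<Rightarrow> complex \<Rightarrow> complex" where
  "Tm b s = (if b = 0 then rGamma (s + 1) else rGamma s / (s + of_real b))"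

definition msum :: "(complex \<times> real) list \<Rightarrow> complex \<Rightarrow> complex" where
  "msum xs s = (\<Sum>p\<leftarrow>xs. fst p * Tm (snd p) s)"

definition poles :: "(complex \<times> real) list \<Rightarrow> complex set" where
  "poles xs = (\<lambda>p. - of_real (snd p)) ` {p \<in> set xs. snd p \<noteq> 0}"

definition Gc :: "(complex \<times> real) list \<Rightarrow> (real \<Rightarrow> complex) \<Rightarrow> complex \<Rightarrow> complex" where
  "Gc xs \<phi> s = msum xs s + rGamma s * integral {0..1} (\<lambda>t. of_real t powr (s - 1) * (\<phi> t - psum xs t))"

definition expand_ok :: "(real \<Rightarrow> complex) \<Rightarrow> (complex \<times> real) list \<Rightarrow> real \<Rightarrow> real \<Rightarrow> bool" where
  "expand_ok \<phi> xs C M \<longleftrightarrow> (\<forall>t. 0 < t \<longrightarrow> t \<le> 1 \<longrightarrow> norm (\<phi> t - psum xs t) \<le> C * t powr M)"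

lemma psum_Nil [simp]: "psum [] t = 0" by (simp add: psum_def)
lemma psum_Cons [simp]: "psum (p # xs) t = fst p * of_real (t powr snd p) + psum xs t" by (simp add: psum_def)
lemma msum_Nil [simp]: "msum [] s = 0" by (simp add: msum_def)
lemma msum_Cons [simp]: "msum (p # xs) s = fst p * Tm (snd p) s + msum xs s" by (simp add: msum_def)
lemma poles_Nil [simp]: "poles [] = {}" by (simp add: poles_def)
lemma poles_Cons: "poles (p # xs) = (if snd p = 0 then poles xs else insert (- of_real (snd p)) (poles xs))"
  by (auto simp: poles_def)

lemma finite_poles [simp]: "finite (poles xs)" by (simp add: poles_def)

lemma psum_cont: "continuous_on {0<..} (psum xs)"
proof (induction xs)
  case Nil then show ?case by (simp add: psum_def[abs_def])
next
  case (Cons p xs)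
  have "continuous_on {0<..} (\<lambda>t. fst p * of_real (t powr snd p) + psum xs t)"
    by (intro continuous_intros Cons) auto
  then show ?case by simp
qed

lemma psum_int:
  assumes "\<And>p. p \<in> set xs \<Longrightarrow> Re s + snd p > 0"
  shows "((\<lambda>t. of_real t powr (s - 1) * psum xs t) has_integral (\<Sum>p\<leftarrow>xs. fst p / (s + of_real (snd p)))) {0..1}"
  using assms
proof (induction xs)
  case Nil then show ?case by simp
next
  case (Cons p xs)
  have h1: "((\<lambda>t. fst p * (of_real t powr (s - 1) * of_real (t powr snd p))) has_integral fst p * (1 / (s + of_real (snd p)))) {0..1}"
    by (intro has_integral_mult_right mellin_power_real) (use Cons.prems in auto)
  have h2: "((\<lambda>t. of_real t powr (s - 1) * psum xs t) has_integral (\<Sum>p\<leftarrow>xs. fst p / (s + of_real (snd p)))) {0..1}"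
    by (rule Cons.IH) (use Cons.prems in auto)
  have "((\<lambda>t. fst p * (of_real t powr (s - 1) * of_real (t powr snd p)) + of_real t powr (s - 1) * psum xs t) has_integral
          (fst p * (1 / (s + of_real (snd p))) + (\<Sum>p\<leftarrow>xs. fst p / (s + of_real (snd p))))) {0..1}"
    by (rule has_integral_add[OF h1 h2])
  then show ?case by (simp add: algebra_simps)
qed

lemma Tm_analytic: "Tm b analytic_on (UNIV - (if b = 0 then {} else {- of_real b}))"
proof (cases "b = 0")
  case True
  then show ?thesis unfolding Tm_def[abs_def] by (simp add: analytic_intros)
next
  case False
  have "(\<lambda>s. rGamma s / (s + of_real b)) analytic_on (UNIV - {- of_real b})"
    by (intro analytic_intros) (auto simp: add_eq_0_iff)
  then show ?thesis using False unfolding Tm_def[abs_def] by simp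
qed

lemma msum_analytic: "msum xs analytic_on (UNIV - poles xs)"
proof (induction xs)
  case Nil then show ?case by (simp add: msum_def[abs_def])
next
  case (Cons p xs)
  have a1: "Tm (snd p) analytic_on (UNIV - poles (p # xs))"
    by (rule analytic_on_subset[OF Tm_analytic]) (auto simp: poles_Cons)
  have a2: "msum xs analytic_on (UNIV - poles (p # xs))"
    by (rule analytic_on_subset[OF Cons.IH]) (auto simp: poles_Cons split: if_splits)
  have "(\<lambda>s. fst p * Tm (snd p) s + msum xs s) analytic_on (UNIV - poles (p # xs))"
    by (intro analytic_intros a1 a2)
  then show ?case by simp
qed

lemma Tm_mero: "Tm b meromorphic_on A"
proof (cases "b = 0")
  case True
  then show ?thesis unfolding Tm_def[abs_def]
    by (simp add: analytic_on_imp_meromorphic_on analytic_intros)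
next
  case False
  have "(\<lambda>s. rGamma s / (s + of_real b)) meromorphic_on A"
    by (intro meromorphic_intros analytic_on_imp_meromorphic_on analytic_intros)
  then show ?thesis using False unfolding Tm_def[abs_def] by simp
qed

lemma msum_mero: "msum xs meromorphic_on A"
proof (induction xs)
  case Nil
  have "(\<lambda>s. 0::complex) meromorphic_on A" by (rule meromorphic_on_const)
  then show ?case by (simp add: msum_def[abs_def])
next
  case (Cons p xs)
  have "(\<lambda>s. fst p * Tm (snd p) s + msum xs s) meromorphic_on A"
    by (intro meromorphic_intros Tm_mero Cons.IH)
  then show ?case by simp
qed


lemma expand_okD: "expand_ok \<phi> xs C M \<Longrightarrow> 0 < t \<Longrightarrow> t \<le> 1 \<Longrightarrow> norm (\<phi> t - psum xs t) \<le> C * t powr M"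
  by (simp add: expand_ok_def)

lemma rem_cont: "continuous_on {0<..1} \<phi> \<Longrightarrow> continuous_on {0<..1} (\<lambda>t. \<phi> t - psum xs t)"
  by (intro continuous_intros continuous_on_subset[OF psum_cont]) auto

lemma Gc_holo:
  assumes cont: "continuous_on {0<..1} \<phi>" and ex: "expand_ok \<phi> xs C M"
  shows "Gc xs \<phi> holomorphic_on ({s. Re s > -M} - poles xs)"
proof -
  have L: "(\<lambda>s. integral {0..1} (\<lambda>t. of_real t powr (s - 1) * (\<phi> t - psum xs t))) holomorphic_on {s. Re s > -M}"
    by (rule mellin01_holo[OF rem_cont[OF cont] expand_okD[OF ex]])
  have m: "msum xs holomorphic_on ({s. Re s > -M} - poles xs)"
    by (rule analytic_imp_holomorphic[OF analytic_on_subset[OF msum_analytic]]) auto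
  show ?thesis unfolding Gc_def[abs_def]
    by (intro holomorphic_intros m holomorphic_on_subset[OF L]) auto
qed

lemma open_minus_poles: "open ({s. Re s > a} - poles xs)"
  by (intro open_Diff open_halfspace_Re_gt finite_imp_closed finite_poles)

lemma Gc_analytic:
  assumes cont: "continuous_on {0<..1} \<phi>" and ex: "expand_ok \<phi> xs C M"
  shows "Gc xs \<phi> analytic_on ({s. Re s > -M} - poles xs)"
  using Gc_holo[OF assms] by (simp add: analytic_on_open[OF open_minus_poles])

lemma Gc_mero:
  assumes cont: "continuous_on {0<..1} \<phi>" and ex: "expand_ok \<phi> xs C M"
  shows "Gc xs \<phi> meromorphic_on {s. Re s > -M}"
proof -
  have L: "(\<lambda>s. integral {0..1} (\<lambda>t. of_real t powr (s - 1) * (\<phi> t - psum xs t))) holomorphic_on {s. Re s > -M}"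
    by (rule mellin01_holo[OF rem_cont[OF cont] expand_okD[OF ex]])
  have "(\<lambda>s. rGamma s * integral {0..1} (\<lambda>t. of_real t powr (s - 1) * (\<phi> t - psum xs t))) holomorphic_on {s. Re s > -M}"
    by (intro holomorphic_intros L)
  then have "(\<lambda>s. rGamma s * integral {0..1} (\<lambda>t. of_real t powr (s - 1) * (\<phi> t - psum xs t))) analytic_on {s. Re s > -M}"
    by (simp add: analytic_on_open open_halfspace_Re_gt)
  then show ?thesis unfolding Gc_def[abs_def]
    by (intro meromorphic_intros msum_mero analytic_on_imp_meromorphic_on)
qed

lemma msum_eq: "s \<noteq> 0 \<Longrightarrow> msum xs s = rGamma s * (\<Sum>p\<leftarrow>xs. fst p / (s + of_real (snd p)))"
proof (induction xs)
  case Nil then show ?case by simp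
next
  case (Cons p xs)
  have "Tm (snd p) s = rGamma s / (s + of_real (snd p))"
    using rGamma_plus1[of s] Cons.prems by (auto simp: Tm_def field_simps)
  then show ?case using Cons by (simp add: algebra_simps)
qed

lemma Gc_eq:
  assumes cont: "continuous_on {0<..1} \<phi>" and ex: "expand_ok \<phi> xs C M"
    and b0: "\<And>t. 0 < t \<Longrightarrow> t \<le> 1 \<Longrightarrow> norm (\<phi> t) \<le> C0 * t powr \<alpha>0"
    and s: "Re s > -\<alpha>0" "Re s > -M" "\<And>p. p \<in> set xs \<Longrightarrow> Re s + snd p > 0" "s \<noteq> 0"
  shows "Gc xs \<phi> s = rGamma s * integral {0..1} (\<lambda>t. of_real t powr (s - 1) * \<phi> t)"
proof -
  have i1: "(\<lambda>t. of_real t powr (s - 1) * (\<phi> t - psum xs t)) integrable_on {0..1}"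
    by (rule mellin01_bound(1)[OF rem_cont[OF cont] expand_okD[OF ex]]) (use s in auto)
  have i2: "((\<lambda>t. of_real t powr (s - 1) * psum xs t) has_integral (\<Sum>p\<leftarrow>xs. fst p / (s + of_real (snd p)))) {0..1}"
    by (rule psum_int) (use s in auto)
  have "((\<lambda>t. of_real t powr (s - 1) * psum xs t + of_real t powr (s - 1) * (\<phi> t - psum xs t)) has_integral
     ((\<Sum>p\<leftarrow>xs. fst p / (s + of_real (snd p))) + integral {0..1} (\<lambda>t. of_real t powr (s - 1) * (\<phi> t - psum xs t)))) {0..1}"
    by (rule has_integral_add[OF i2 integrable_integral[OF i1]])
  then have "((\<lambda>t. of_real t powr (s - 1) * \<phi> t) has_integral
     ((\<Sum>p\<leftarrow>xs. fst p / (s + of_real (snd p))) + integral {0..1} (\<lambda>t. of_real t powr (s - 1) * (\<phi> t - psum xs t)))) {0..1}"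
    by (simp add: algebra_simps)
  then have "integral {0..1} (\<lambda>t. of_real t powr (s - 1) * \<phi> t) =
     (\<Sum>p\<leftarrow>xs. fst p / (s + of_real (snd p))) + integral {0..1} (\<lambda>t. of_real t powr (s - 1) * (\<phi> t - psum xs t))"
    by (rule integral_unique)
  then show ?thesis unfolding Gc_def msum_eq[OF s(4)] by (simp add: algebra_simps)
qed

lemma mero_identity:
  assumes "g meromorphic_on A" "open A" "connected A" "s0 \<in> A" "eventually (\<lambda>w. g w = 0) (at s0)" "z \<in> A"
  shows "eventually (\<lambda>w. g w = 0) (at z)"
proof -
  from meromorphic_imp_constant_or_avoid[OF assms(1-3), of 0]
  consider "eventually (\<lambda>w. g w = 0) (cosparse A)" | "eventually (\<lambda>w. g w \<noteq> 0) (cosparse A)" by blast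
  then show ?thesis
  proof cases
    case 1 then show ?thesis using assms by (simp add: eventually_cosparse_open_eq)
  next
    case 2
    then have "eventually (\<lambda>w. g w \<noteq> 0) (at s0)" using assms by (simp add: eventually_cosparse_open_eq)
    with assms(5) have "eventually (\<lambda>w. False) (at s0)" by eventually_elim auto
    then show ?thesis by (simp add: eventually_False)
  qed
qed

lemma analytic_eventually_zero:
  assumes "g analytic_on {z}" "eventually (\<lambda>w. g w = 0) (at z)"
  shows "g z = 0"
proof -
  have "g \<midarrow>z\<rightarrow> g z" by (intro isContD analytic_at_imp_isCont assms)
  moreover have "g \<midarrow>z\<rightarrow> 0" by (rule tendsto_eventually[OF assms(2)])
  ultimately show ?thesis by (rule LIM_unique)
qed

lemma big_point:
  fixes xs :: "(complex \<times> real) list"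
  shows "\<exists>r::real. \<forall>w. dist w (of_real r) < 1 \<longrightarrow> Re w > a \<and> (\<forall>p\<in>set xs. Re w + snd p > 0) \<and> w \<noteq> 0"
proof -
  define B where "B = (\<Sum>p\<leftarrow>xs. \<bar>snd p\<bar>)"
  have B: "\<bar>snd p\<bar> \<le> B" if "p \<in> set xs" for p
    unfolding B_def using that by (intro member_le_sum_list) auto
  have B0: "B \<ge> 0" unfolding B_def by (induction xs) auto
  show ?thesis
  proof (intro exI allI impI)
    fix w :: complex assume w: "dist w (of_real (2 + \<bar>a\<bar> + B)) < 1"
    have "\<bar>Re w - (2 + \<bar>a\<bar> + B)\<bar> < 1"
      using w abs_Re_le_cmod[of "w - of_real (2 + \<bar>a\<bar> + B)"] by (simp add: dist_norm)
    then have Rw: "Re w > 1 + \<bar>a\<bar> + B" by linarith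
    show "Re w > a \<and> (\<forall>p\<in>set xs. Re w + snd p > 0) \<and> w \<noteq> 0"
    proof (intro conjI ballI)
      show "Re w > a" using Rw B0 by linarith
      show "w \<noteq> 0" using Rw B0 by auto
      fix p assume "p \<in> set xs"
      then show "Re w + snd p > 0" using B[of p] Rw by linarith
    qed
  qed
qed

lemma halfplanes_conn: "connected ({s. Re s > a} \<inter> {s. Re s > b})"
  by (intro convex_connected convex_Int convex_halfspace_Re_gt)

lemma halfplanes_open: "open ({s. Re s > a} \<inter> {s. Re s > b})"
  by (intro open_Int open_halfspace_Re_gt)

lemma Gc_agree_K:
  assumes cont: "continuous_on {0<..1} \<phi>" and ex: "expand_ok \<phi> xs C M"
    and b0: "\<And>t. 0 < t \<Longrightarrow> t \<le> 1 \<Longrightarrow> norm (\<phi> t) \<le> C0 * t powr \<alpha>0"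
    and w: "Re w > -M" "Re w > -\<alpha>0" "w \<notin> poles xs"
  shows "Gc xs \<phi> w = rGamma w * integral {0..1} (\<lambda>t. of_real t powr (w - 1) * \<phi> t)"
proof -
  define K where "K = (\<lambda>s. rGamma s * integral {0..1} (\<lambda>t. of_real t powr (s - 1) * \<phi> t))"
  define A where "A = {s. Re s > -M} \<inter> {s. Re s > -\<alpha>0}"
  define g where "g = (\<lambda>s. Gc xs \<phi> s - K s)"
  have Khol: "K holomorphic_on {s. Re s > -\<alpha>0}"
    unfolding K_def by (intro holomorphic_intros mellin01_holo[OF cont b0])
  have Kan: "K analytic_on {s. Re s > -\<alpha>0}"
    using Khol by (simp add: analytic_on_open open_halfspace_Re_gt)
  have gm: "g meromorphic_on A" unfolding g_def A_def
    by (intro meromorphic_intros meromorphic_on_subset[OF Gc_mero[OF cont ex]]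
        meromorphic_on_subset[OF analytic_on_imp_meromorphic_on[OF Kan]]) auto
  obtain r :: real where r: "\<And>w. dist w (of_real r) < 1 \<Longrightarrow> Re w > \<bar>M\<bar> + \<bar>\<alpha>0\<bar> \<and> (\<forall>p\<in>set xs. Re w + snd p > 0) \<and> w \<noteq> 0"
    using big_point[of "\<bar>M\<bar> + \<bar>\<alpha>0\<bar>" xs] by blast
  have rA: "of_real r \<in> A" using r[of "of_real r"] unfolding A_def by auto
  have ev0: "\<forall>w. w \<noteq> of_real r \<and> dist w (of_real r) < 1 \<longrightarrow> g w = 0"
  proof (intro allI impI)
    fix w :: complex assume "w \<noteq> of_real r \<and> dist w (of_real r) < 1"
    then have rw: "Re w > \<bar>M\<bar> + \<bar>\<alpha>0\<bar>" "\<And>p. p \<in> set xs \<Longrightarrow> Re w + snd p > 0" "w \<noteq> 0" using r by auto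
    show "g w = 0" unfolding g_def K_def
      by (subst Gc_eq[OF cont ex b0]) (use rw in auto)
  qed
  then have ev: "eventually (\<lambda>w. g w = 0) (at (of_real r))"
    unfolding eventually_at by (intro exI[of _ 1]) auto
  have "w \<in> A" using w unfolding A_def by auto
  then have evw: "eventually (\<lambda>w. g w = 0) (at w)"
    by (rule mero_identity[OF gm _ _ rA ev, rotated 2]) (simp_all add: A_def halfplanes_conn halfplanes_open)
  have gan: "g analytic_on {w}" unfolding g_def
    by (intro analytic_intros analytic_on_subset[OF Gc_analytic[OF cont ex]] analytic_on_subset[OF Kan]) (use w in auto)
  have "g w = 0" by (rule analytic_eventually_zero[OF gan evw])
  then show ?thesis unfolding g_def K_def by simp
qed

lemma Gc_agree:
  assumes cont: "continuous_on {0<..1} \<phi>" and ex: "expand_ok \<phi> xs C M" and ex': "expand_ok \<phi> ys C' M'"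
    and b0: "\<And>t. 0 < t \<Longrightarrow> t \<le> 1 \<Longrightarrow> norm (\<phi> t) \<le> C0 * t powr \<alpha>0"
    and w: "Re w > -M" "Re w > -M'" "w \<notin> poles xs" "w \<notin> poles ys"
  shows "Gc xs \<phi> w = Gc ys \<phi> w"
proof -
  define A where "A = {s. Re s > -M} \<inter> {s. Re s > -M'}"
  define g where "g = (\<lambda>s. Gc xs \<phi> s - Gc ys \<phi> s)"
  have gm: "g meromorphic_on A" unfolding g_def A_def
    by (intro meromorphic_intros meromorphic_on_subset[OF Gc_mero[OF cont ex]]
        meromorphic_on_subset[OF Gc_mero[OF cont ex']]) auto
  obtain r :: real where r: "\<And>w. dist w (of_real r) < 1 \<Longrightarrow> Re w > \<bar>M\<bar> + \<bar>M'\<bar> + \<bar>\<alpha>0\<bar> \<and> (\<forall>p\<in>set (xs @ ys). Re w + snd p > 0) \<and> w \<noteq> 0"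
    using big_point[of "\<bar>M\<bar> + \<bar>M'\<bar> + \<bar>\<alpha>0\<bar>" "xs @ ys"] by blast
  have rA: "of_real r \<in> A" using r[of "of_real r"] unfolding A_def by auto
  have ev0: "\<forall>w. w \<noteq> of_real r \<and> dist w (of_real r) < 1 \<longrightarrow> g w = 0"
  proof (intro allI impI)
    fix w :: complex assume "w \<noteq> of_real r \<and> dist w (of_real r) < 1"
    then have rw: "Re w > \<bar>M\<bar> + \<bar>M'\<bar> + \<bar>\<alpha>0\<bar>" "\<And>p. p \<in> set (xs @ ys) \<Longrightarrow> Re w + snd p > 0" "w \<noteq> 0" using r by auto
    have "Gc xs \<phi> w = rGamma w * integral {0..1} (\<lambda>t. of_real t powr (w - 1) * \<phi> t)"
      by (rule Gc_eq[OF cont ex b0]) (use rw in auto)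
    moreover have "Gc ys \<phi> w = rGamma w * integral {0..1} (\<lambda>t. of_real t powr (w - 1) * \<phi> t)"
      by (rule Gc_eq[OF cont ex' b0]) (use rw in auto)
    ultimately show "g w = 0" unfolding g_def by simp
  qed
  then have ev: "eventually (\<lambda>w. g w = 0) (at (of_real r))"
    unfolding eventually_at by (intro exI[of _ 1]) auto
  have "w \<in> A" using w unfolding A_def by auto
  then have evw: "eventually (\<lambda>w. g w = 0) (at w)"
    by (rule mero_identity[OF gm _ _ rA ev, rotated 2]) (simp_all add: A_def halfplanes_conn halfplanes_open)
  have gan: "g analytic_on {w}" unfolding g_def
    by (intro analytic_intros analytic_on_subset[OF Gc_analytic[OF cont ex]] analytic_on_subset[OF Gc_analytic[OF cont ex']]) (use w in auto)
  have "g w = 0" by (rule analytic_eventually_zero[OF gan evw])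
  then show ?thesis unfolding g_def by simp
qed


lemma zeta1_exists:
  assumes cont: "continuous_on {0<..1} \<phi>"
    and b0: "\<And>t. 0 < t \<Longrightarrow> t \<le> 1 \<Longrightarrow> norm (\<phi> t) \<le> C0 * t powr \<alpha>0"
    and exps: "\<And>M. \<exists>xs C. expand_ok \<phi> xs C M"
  shows "\<exists>f. f meromorphic_on UNIV \<and>
     (\<forall>s. Re s > - \<alpha>0 \<longrightarrow> f s = rGamma s * integral {0..1} (\<lambda>t. complex_of_real t powr (s - 1) * \<phi> t))"
proof -
  define XS where "XS = (\<lambda>n::nat. SOME xs. \<exists>C. expand_ok \<phi> xs C (real n))"
  have "\<exists>C. expand_ok \<phi> (XS n) C (real n)" for n
    unfolding XS_def using someI_ex[OF exps[of "real n"]] .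
  then obtain CC where CC: "\<And>n. expand_ok \<phi> (XS n) (CC n) (real n)" by metis
  define K where "K = (\<lambda>s. rGamma s * integral {0..1} (\<lambda>t. complex_of_real t powr (s - 1) * \<phi> t))"
  define nn where "nn = (\<lambda>s::complex. nat \<lceil>- Re s\<rceil> + 1)"
  have nn: "- real (nn s) < Re s" for s
  proof -
    have "- Re s \<le> real (nat \<lceil>- Re s\<rceil>)" by linarith
    then show ?thesis unfolding nn_def by simp
  qed
  define f where "f = (\<lambda>s. if Re s > - \<alpha>0 then K s else Gc (XS (nn s)) \<phi> s)"
  have "f meromorphic_on {z}" for z
  proof -
    define m where "m = nn z + 1"
    have zm: "Re z > - real m" using nn[of z] unfolding m_def by simp
    have Gm: "Gc (XS m) \<phi> meromorphic_on {z}"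
      by (rule meromorphic_on_subset[OF Gc_mero[OF cont CC]]) (use zm in auto)
    define Q where "Q = (\<Union>k\<in>{..m}. poles (XS k))"
    have fQ: "finite Q" unfolding Q_def by auto
    have ev1: "eventually (\<lambda>w. w \<notin> Q) (at z)"
      using islimpt_finite[OF fQ, of z] by (simp add: islimpt_iff_eventually)
    have ev2: "eventually (\<lambda>w. dist w z < 1/2) (at z)"
      unfolding eventually_at by (intro exI[of _ "1/2"]) auto
    have "eventually (\<lambda>w. f w = Gc (XS m) \<phi> w) (at z)"
      using ev1 ev2
    proof eventually_elim
      case (elim w)
      have "\<bar>Re w - Re z\<bar> < 1/2"
        using elim(2) abs_Re_le_cmod[of "w - z"] by (simp add: dist_norm)
      then have d1: "Re w - Re z < 1/2" "Re z - Re w < 1/2" by linarith+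
      have wm: "Re w > - real m" using nn[of z] d1 unfolding m_def by simp
      have "\<lceil>- Re w\<rceil> \<le> \<lceil>- Re z + 1\<rceil>" by (rule ceiling_mono) (use d1 in linarith)
      also have "\<lceil>- Re z + 1\<rceil> = \<lceil>- Re z\<rceil> + 1" by (rule ceiling_add_one)
      finally have "\<lceil>- Re w\<rceil> \<le> \<lceil>- Re z\<rceil> + 1" .
      then have nw: "nn w \<le> m" unfolding nn_def m_def by linarith
      have pm: "w \<notin> poles (XS m)" using elim(1) unfolding Q_def by auto
      have pw: "w \<notin> poles (XS (nn w))" using elim(1) nw unfolding Q_def by auto
      show ?case
      proof (cases "Re w > - \<alpha>0")
        case True
        have "Gc (XS m) \<phi> w = K w" unfolding K_def
          by (rule Gc_agree_K[OF cont CC b0]) (use True wm pm in auto)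
        then show ?thesis using True unfolding f_def by simp
      next
        case False
        have "Gc (XS (nn w)) \<phi> w = Gc (XS m) \<phi> w"
          by (rule Gc_agree[OF cont CC CC b0]) (use nn[of w] wm pm pw in auto)
        then show ?thesis using False unfolding f_def by simp
      qed
    qed
    then show ?thesis using Gm by (subst meromorphic_on_cong) auto
  qed
  then have "f meromorphic_on UNIV" by (subst meromorphic_on_meromorphic_at) auto
  moreover have "\<forall>s. Re s > - \<alpha>0 \<longrightarrow> f s = K s" unfolding f_def by auto
  ultimately show ?thesis unfolding K_def by blast
qed

lemma zeta1_prop:
  assumes cont: "continuous_on {0<..1} \<phi>"
    and b0: "\<And>t. 0 < t \<Longrightarrow> t \<le> 1 \<Longrightarrow> norm (\<phi> t) \<le> C0 * t powr \<alpha>0"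
    and exps: "\<And>M. \<exists>xs C. expand_ok \<phi> xs C M"
  shows "zeta1 \<phi> \<alpha>0 meromorphic_on UNIV"
    "\<And>s. Re s > - \<alpha>0 \<Longrightarrow> zeta1 \<phi> \<alpha>0 s = rGamma s * integral {0..1} (\<lambda>t. complex_of_real t powr (s - 1) * \<phi> t)"
proof -
  have "zeta1 \<phi> \<alpha>0 meromorphic_on UNIV \<and>
     (\<forall>s. Re s > - \<alpha>0 \<longrightarrow> zeta1 \<phi> \<alpha>0 s = rGamma s * integral {0..1} (\<lambda>t. complex_of_real t powr (s - 1) * \<phi> t))"
    unfolding zeta1_def by (rule someI_ex[OF zeta1_exists[OF cont b0 exps]])
  then show "zeta1 \<phi> \<alpha>0 meromorphic_on UNIV"
    "\<And>s. Re s > - \<alpha>0 \<Longrightarrow> zeta1 \<phi> \<alpha>0 s = rGamma s * integral {0..1} (\<lambda>t. complex_of_real t powr (s - 1) * \<phi> t)"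
    by auto
qed


definition Td :: "real \<Rightarrow> complex" where
  "Td b = (if b = 0 then euler_mascheroni else 1 / complex_of_real b)"

lemma rGamma_deriv0: "(rGamma has_field_derivative 1) (at (0::complex))"
  using has_field_derivative_rGamma_nonpos_int[of 0 UNIV] by simp

lemma rGamma_deriv1: "(rGamma has_field_derivative euler_mascheroni) (at (1::complex))"
proof -
  have "(1::complex) \<notin> \<int>\<^sub>\<le>\<^sub>0" by (auto elim!: nonpos_Ints_cases)
  from has_field_derivative_rGamma_no_nonpos_int[OF this, of UNIV] show ?thesis by simp
qed

lemma rGamma_0 [simp]: "rGamma (0::complex) = 0"
  using rGamma_of_int[of 0] by simp

lemma Tm_deriv: "(Tm b has_field_derivative Td b) (at 0)"
proof (cases "b = 0")
  case True
  have d1: "(rGamma has_field_derivative euler_mascheroni) (at (0 + 1::complex))"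
    using rGamma_deriv1 by simp
  have "((\<lambda>s. rGamma (s + 1)) has_field_derivative euler_mascheroni * (1 + 0)) (at (0::complex))"
    by (rule DERIV_chain2[OF d1 DERIV_add[OF DERIV_ident DERIV_const]])
  then show ?thesis using True unfolding Tm_def[abs_def] Td_def by simp
next
  case False
  have "((\<lambda>s. rGamma s / (s + of_real b)) has_field_derivative
        (1 * (0 + of_real b) - rGamma 0 * (1 + 0)) / ((0 + of_real b) * (0 + of_real b))) (at (0::complex))"
    by (intro DERIV_divide rGamma_deriv0 DERIV_add DERIV_ident DERIV_const) (use False in simp)
  then show ?thesis using False unfolding Tm_def[abs_def] Td_def by simp
qed

lemma msum_deriv: "(msum xs has_field_derivative (\<Sum>p\<leftarrow>xs. fst p * Td (snd p))) (at 0)"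
proof (induction xs)
  case Nil then show ?case by (simp add: msum_def[abs_def])
next
  case (Cons p xs)
  have "((\<lambda>s. fst p * Tm (snd p) s + msum xs s) has_field_derivative (fst p * Td (snd p) + (\<Sum>p\<leftarrow>xs. fst p * Td (snd p)))) (at 0)"
    by (intro DERIV_add DERIV_cmult Tm_deriv Cons.IH)
  then show ?case by simp
qed

lemma zero_notin_poles: "0 \<notin> poles xs"
  by (auto simp: poles_def)

lemma zeta1_deriv:
  assumes cont: "continuous_on {0<..1} \<phi>"
    and b0: "\<And>t. 0 < t \<Longrightarrow> t \<le> 1 \<Longrightarrow> norm (\<phi> t) \<le> C0 * t powr \<alpha>0"
    and exps: "\<And>M. \<exists>xs C. expand_ok \<phi> xs C M"
    and ex: "expand_ok \<phi> xs C \<mu>" and mu: "\<mu> > 0"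
  shows "deriv (remove_sings (zeta1 \<phi> \<alpha>0)) 0 =
    (\<Sum>p\<leftarrow>xs. fst p * Td (snd p)) + integral {0..1} (\<lambda>t. complex_of_real t powr (-1) * (\<phi> t - psum xs t))"
proof -
  define F where "F = zeta1 \<phi> \<alpha>0"
  note Fp = zeta1_prop[OF cont b0 exps, folded F_def]
  define A where "A = {s. Re s > -\<mu>}"
  define g where "g = (\<lambda>s. F s - Gc xs \<phi> s)"
  have gm: "g meromorphic_on A" unfolding g_def A_def
    by (intro meromorphic_intros meromorphic_on_subset[OF Fp(1)] Gc_mero[OF cont ex]) auto
  obtain r :: real where r: "\<And>w. dist w (of_real r) < 1 \<Longrightarrow> Re w > \<bar>\<mu>\<bar> + \<bar>\<alpha>0\<bar> \<and> (\<forall>p\<in>set xs. Re w + snd p > 0) \<and> w \<noteq> 0"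
    using big_point[of "\<bar>\<mu>\<bar> + \<bar>\<alpha>0\<bar>" xs] by blast
  have rA: "of_real r \<in> A" using r[of "of_real r"] unfolding A_def by auto
  have ev0: "\<forall>w. w \<noteq> of_real r \<and> dist w (of_real r) < 1 \<longrightarrow> g w = 0"
  proof (intro allI impI)
    fix w :: complex assume "w \<noteq> of_real r \<and> dist w (of_real r) < 1"
    then have rw: "Re w > \<bar>\<mu>\<bar> + \<bar>\<alpha>0\<bar>" "\<And>p. p \<in> set xs \<Longrightarrow> Re w + snd p > 0" "w \<noteq> 0" using r by auto
    have "Gc xs \<phi> w = rGamma w * integral {0..1} (\<lambda>t. of_real t powr (w - 1) * \<phi> t)"
      by (rule Gc_eq[OF cont ex b0]) (use rw in auto)
    moreover have "F w = rGamma w * integral {0..1} (\<lambda>t. of_real t powr (w - 1) * \<phi> t)"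
      by (rule Fp(2)) (use rw in auto)
    ultimately show "g w = 0" unfolding g_def by simp
  qed
  then have ev: "eventually (\<lambda>w. g w = 0) (at (of_real r))"
    unfolding eventually_at by (intro exI[of _ 1]) auto
  have evz: "eventually (\<lambda>w. g w = 0) (at z)" if "z \<in> A" for z
    by (rule mero_identity[OF gm _ _ rA ev that]) (simp_all add: A_def open_halfspace_Re_gt convex_connected convex_halfspace_Re_gt)
  define U where "U = A - poles xs"
  have Uo: "open U" unfolding U_def A_def by (rule open_minus_poles)
  have U0: "0 \<in> U" unfolding U_def A_def using mu zero_notin_poles by auto
  have eqU: "remove_sings F z = Gc xs \<phi> z" if "z \<in> U" for z
  proof -
    have "eventually (\<lambda>w. F w = Gc xs \<phi> w) (at z)"
      using evz[of z] that unfolding U_def g_def by auto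
    then have "remove_sings F z = remove_sings (Gc xs \<phi>) z" by (rule remove_sings_cong) simp
    also have "\<dots> = Gc xs \<phi> z"
      by (rule remove_sings_at_analytic, rule analytic_on_subset[OF Gc_analytic[OF cont ex]]) (use that in \<open>auto simp: U_def A_def\<close>)
    finally show ?thesis .
  qed
  have "deriv (remove_sings F) 0 = deriv (Gc xs \<phi>) 0"
    by (rule deriv_cong_ev[OF _ refl]) (use eventually_nhds_in_open[OF Uo U0] eqU in \<open>auto elim: eventually_mono\<close>)
  also have "deriv (Gc xs \<phi>) 0 = (\<Sum>p\<leftarrow>xs. fst p * Td (snd p)) + integral {0..1} (\<lambda>t. complex_of_real t powr (-1) * (\<phi> t - psum xs t))"
  proof (rule DERIV_imp_deriv)
    define L where "L = (\<lambda>s. integral {0..1} (\<lambda>t. of_real t powr (s - 1) * (\<phi> t - psum xs t)))"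
    have L: "L holomorphic_on A" unfolding L_def A_def
      by (rule mellin01_holo[OF rem_cont[OF cont] expand_okD[OF ex]])
    have A0: "0 \<in> A" "open A" using mu by (auto simp: A_def open_halfspace_Re_gt)
    obtain L' where L': "(L has_field_derivative L') (at 0)"
      using holomorphic_on_imp_differentiable_at[OF L A0(2) A0(1)] field_differentiable_def by blast
    have m: "((\<lambda>s. rGamma s * L s) has_field_derivative L 0) (at 0)"
      using DERIV_mult[OF rGamma_deriv0 L'] by simp
    have "((\<lambda>s. msum xs s + rGamma s * L s) has_field_derivative
           (\<Sum>p\<leftarrow>xs. fst p * Td (snd p)) + L 0) (at 0)"
      by (rule DERIV_add[OF msum_deriv m])
    then show "(Gc xs \<phi> has_field_derivative (\<Sum>p\<leftarrow>xs. fst p * Td (snd p)) + integral {0..1} (\<lambda>t. complex_of_real t powr (-1) * (\<phi> t - psum xs t))) (at 0)"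
      unfolding Gc_def[abs_def] L_def by simp
  qed
  finally show ?thesis unfolding F_def .
qed

lemma compact_norm_bound:
  fixes f :: "real \<Rightarrow> complex"
  assumes "continuous_on {a..b} f"
  shows "\<exists>B. \<forall>t\<in>{a..b}. norm (f t) \<le> B"
proof -
  have "compact (f ` {a..b})" by (rule compact_continuous_image[OF assms compact_Icc])
  then have "bounded (f ` {a..b})" by (rule compact_imp_bounded)
  then show ?thesis unfolding bounded_iff by auto
qed

lemma bound_from_bigo_0:
  fixes f :: "real \<Rightarrow> complex"
  assumes cont: "continuous_on {0<..1} f" and O: "(\<lambda>t. norm (f t)) \<in> O[at_right 0](\<lambda>t. t powr a)"
  shows "\<exists>C. \<forall>t. 0 < t \<longrightarrow> t \<le> 1 \<longrightarrow> norm (f t) \<le> C * t powr a"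
proof -
  obtain c where c: "c > 0" and ev: "eventually (\<lambda>t. norm (norm (f t)) \<le> c * norm (t powr a)) (at_right 0)"
    using O by (rule landau_o.bigE)
  then obtain b where b: "b > 0" and hb: "\<And>t. t > 0 \<Longrightarrow> t < b \<Longrightarrow> norm (f t) \<le> c * t powr a"
    unfolding eventually_at_right_field by auto
  define d where "d = min (b / 2) 1"
  have d: "0 < d" "d \<le> 1" "d < b" using b by (auto simp: d_def)
  obtain B where B: "\<And>t. t \<in> {d..1} \<Longrightarrow> norm (f t) \<le> B"
  proof -
    have "{d..1} \<subseteq> {0<..1}" using d by auto
    from compact_norm_bound[OF continuous_on_subset[OF cont this]] show ?thesis using that by blast
  qed
  have "norm (f 1) \<le> B" using B[of 1] d by simp
  then have B0: "B \<ge> 0" using norm_ge_zero order_trans by blast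
  define m where "m = min (d powr a) 1"
  have m: "m > 0" using d by (simp add: m_def)
  have tm: "t powr a \<ge> m" if "d \<le> t" "t \<le> 1" for t
  proof (cases "a \<ge> 0")
    case True
    then have "d powr a \<le> t powr a" using that d by (intro powr_mono2) auto
    then show ?thesis unfolding m_def by linarith
  next
    case False
    then have "1 powr a \<le> t powr a" using that d by (intro powr_mono2') auto
    then show ?thesis unfolding m_def by simp
  qed
  show ?thesis
  proof (intro exI[of _ "max c (B / m)"] allI impI)
    fix t :: real assume t: "0 < t" "t \<le> 1"
    have tp: "t powr a \<ge> 0" by simp
    show "norm (f t) \<le> max c (B / m) * t powr a"
    proof (cases "t < b")
      case True
      then have "norm (f t) \<le> c * t powr a" using hb t by simp
      also have "\<dots> \<le> max c (B / m) * t powr a" by (intro mult_right_mono tp) simp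
      finally show ?thesis .
    next
      case False
      then have "norm (f t) \<le> B" using B t d by auto
      also have "B = (B / m) * m" using m by simp
      also have "\<dots> \<le> (B / m) * t powr a" using tm[of t] False d t B0 m
        by (intro mult_left_mono) auto
      also have "\<dots> \<le> max c (B / m) * t powr a" by (intro mult_right_mono tp) simp
      finally show ?thesis .
    qed
  qed
qed

lemma bound_from_bigo_inf:
  fixes f :: "real \<Rightarrow> complex"
  assumes cont: "continuous_on {1..} f" and O: "(\<lambda>t. norm (f t)) \<in> O[at_top](\<lambda>t. t powr a)"
  shows "\<exists>C. \<forall>t. 1 \<le> t \<longrightarrow> norm (f t) \<le> C * t powr a"
proof -
  obtain c where c: "c > 0" and ev: "eventually (\<lambda>t. norm (norm (f t)) \<le> c * norm (t powr a)) at_top"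
    using O by (rule landau_o.bigE)
  then obtain N where hN: "\<And>t. t \<ge> N \<Longrightarrow> norm (f t) \<le> c * t powr a"
    unfolding eventually_at_top_linorder by auto
  define T where "T = max N 1"
  have T: "1 \<le> T" "N \<le> T" by (auto simp: T_def)
  obtain B where B: "\<And>t. t \<in> {1..T} \<Longrightarrow> norm (f t) \<le> B"
  proof -
    have "{1..T} \<subseteq> {1..}" by auto
    from compact_norm_bound[OF continuous_on_subset[OF cont this]] show ?thesis using that by blast
  qed
  have "norm (f 1) \<le> B" using B[of 1] T by simp
  then have B0: "B \<ge> 0" using norm_ge_zero order_trans by blast
  define m where "m = min (T powr a) 1"
  have m: "m > 0" using T by (simp add: m_def)
  have tm: "t powr a \<ge> m" if "1 \<le> t" "t \<le> T" for t
  proof (cases "a \<ge> 0")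
    case True
    then have "1 powr a \<le> t powr a" using that by (intro powr_mono2) auto
    then show ?thesis unfolding m_def by simp
  next
    case False
    then have "T powr a \<le> t powr a" using that by (intro powr_mono2') auto
    then show ?thesis unfolding m_def by linarith
  qed
  show ?thesis
  proof (intro exI[of _ "max c (B / m)"] allI impI)
    fix t :: real assume t: "1 \<le> t"
    have tp: "t powr a \<ge> 0" by simp
    show "norm (f t) \<le> max c (B / m) * t powr a"
    proof (cases "t \<ge> N")
      case True
      then have "norm (f t) \<le> c * t powr a" using hN by simp
      also have "\<dots> \<le> max c (B / m) * t powr a" by (intro mult_right_mono tp) simp
      finally show ?thesis .
    next
      case False
      then have tT: "t \<le> T" using T by linarith
      then have "norm (f t) \<le> B" using B t by auto
      also have "B = (B / m) * m" using m by simp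
      also have "\<dots> \<le> (B / m) * t powr a" using tm[of t] tT t B0 m
        by (intro mult_left_mono) auto
      also have "\<dots> \<le> max c (B / m) * t powr a" by (intro mult_right_mono tp) simp
      finally show ?thesis .
    qed
  qed
qed

lemma zeta2_deriv:
  assumes cont: "continuous_on {1..} \<theta>" and bnd: "\<And>t. 1 \<le> t \<Longrightarrow> norm (\<theta> t - b0) \<le> C * t powr (-\<rho>)"
    and rho: "\<rho> > 0"
  shows "deriv (zeta2 \<theta> b0) 0 = - b0 * euler_mascheroni + integral {1..} (\<lambda>t. of_real t powr (-1) * (\<theta> t - b0))"
proof (rule DERIV_imp_deriv)
  define J where "J = (\<lambda>s. integral {1..} (\<lambda>t. of_real t powr (s - 1) * (\<theta> t - b0)))"
  have J: "J holomorphic_on {s. Re s < \<rho>}" unfolding J_def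
    by (rule mellin1inf_holo[OF _ bnd]) (intro continuous_intros cont)
  have A0: "0 \<in> {s. Re s < \<rho>}" "open {s. Re s < \<rho>}" using rho by (auto simp: open_halfspace_Re_lt)
  obtain J' where J': "(J has_field_derivative J') (at 0)"
    using holomorphic_on_imp_differentiable_at[OF J A0(2) A0(1)] field_differentiable_def by blast
  have d1: "(rGamma has_field_derivative euler_mascheroni) (at (0 + 1::complex))"
    using rGamma_deriv1 by simp
  have g1: "((\<lambda>s. rGamma (s + 1)) has_field_derivative euler_mascheroni * (1 + 0)) (at (0::complex))"
    by (rule DERIV_chain2[OF d1 DERIV_add[OF DERIV_ident DERIV_const]])
  have m: "((\<lambda>s. rGamma s * J s) has_field_derivative J 0) (at 0)"
    using DERIV_mult[OF rGamma_deriv0 J'] by simp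
  have "((\<lambda>s. - b0 * rGamma (s + 1) + rGamma s * J s) has_field_derivative
      - b0 * (euler_mascheroni * (1 + 0)) + J 0) (at 0)"
    by (rule DERIV_add[OF DERIV_cmult[OF g1] m])
  then show "(zeta2 \<theta> b0 has_field_derivative - b0 * euler_mascheroni + integral {1..} (\<lambda>t. of_real t powr (-1) * (\<theta> t - b0))) (at 0)"
    unfolding zeta2_def[abs_def] J_def by simp
qed

lemma exp_minus_le_inv: "(t::real) > 0 \<Longrightarrow> exp (- t) \<le> 1 / t"
proof -
  assume t: "t > 0"
  have "1 + t \<le> exp t" by (rule exp_ge_add_one_self)
  then have "t \<le> exp t" by linarith
  then show ?thesis using t by (simp add: exp_minus field_simps)
qed

lemma exp_minus_diff_le: "(t::real) \<ge> 0 \<Longrightarrow> \<bar>exp (- t) - 1\<bar> \<le> t"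
proof -
  assume t: "t \<ge> 0"
  have "1 + (- t) \<le> exp (- t)" by (rule exp_ge_add_one_self)
  moreover have "exp (- t) \<le> 1" using t by simp
  ultimately show ?thesis by linarith
qed

lemma cont_exp_minus: "continuous_on A (\<lambda>t::real. complex_of_real (exp (- (l * t))))"
  by (intro continuous_intros)

lemma bnd_exp_inf:
  assumes "l > 0" "t \<ge> 1"
  shows "norm (complex_of_real (exp (- (l * t)))) \<le> (1 / l) * t powr (-1)"
proof -
  have "exp (- (l * t)) \<le> 1 / (l * t)" using assms by (intro exp_minus_le_inv) auto
  then show ?thesis using assms by (simp add: powr_minus field_simps)
qed

lemma bnd_exp_01: "t > 0 \<Longrightarrow> norm (complex_of_real (exp (- t)) - 1) \<le> 1 * t powr 1"
proof -
  assume t: "t > 0"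
  have "norm (complex_of_real (exp (- t)) - 1) = \<bar>exp (- t) - 1\<bar>"
    by (metis norm_of_real of_real_1 of_real_diff)
  also have "\<dots> \<le> t" using t by (intro exp_minus_diff_le) auto
  finally show ?thesis using t by simp
qed

definition c0 :: complex where
  "c0 = integral {0..1} (\<lambda>t. of_real t powr (-1) * (of_real (exp (- t)) - 1))
      + integral {1..} (\<lambda>t. of_real t powr (-1) * of_real (exp (- t)))"

lemma c0_eq: "c0 = - euler_mascheroni"
proof -
  define A where "A = (\<lambda>s::complex. integral {0..1} (\<lambda>t. of_real t powr (s - 1) * (of_real (exp (- t)) - 1))
      + integral {1..} (\<lambda>t. of_real t powr (s - 1) * of_real (exp (- t))))"
  have cA: "continuous_on {0<..1} (\<lambda>t. complex_of_real (exp (- t)) - 1)" by (intro continuous_intros)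
  have cB: "continuous_on {1..} (\<lambda>t. complex_of_real (exp (- t)))" by (intro continuous_intros)
  have bA: "norm (complex_of_real (exp (- t)) - 1) \<le> 1 * t powr 1" if "0 < t" "t \<le> 1" for t
    using bnd_exp_01[of t] that by simp
  have bB: "norm (complex_of_real (exp (- t))) \<le> 1 * t powr (- 1)" if "1 \<le> t" for t
    using bnd_exp_inf[of 1 t] that by simp
  have hA: "(\<lambda>s. integral {0..1} (\<lambda>t. of_real t powr (s - 1) * (of_real (exp (- t)) - 1))) holomorphic_on {s. Re s > -1}"
    by (rule mellin01_holo[OF cA bA])
  have hB: "(\<lambda>s. integral {1..} (\<lambda>t. of_real t powr (s - 1) * of_real (exp (- t)))) holomorphic_on {s. Re s < 1}"
    by (rule mellin1inf_holo[OF cB bB])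
  have "A holomorphic_on ({s. Re s > -1} \<inter> {s. Re s < 1})"
    unfolding A_def by (intro holomorphic_intros holomorphic_on_subset[OF hA] holomorphic_on_subset[OF hB]) auto
  then have "continuous_on ({s. Re s > -1} \<inter> {s. Re s < 1}) A" by (rule holomorphic_on_imp_continuous_on)
  then have "isCont A 0"
    by (rule continuous_on_interior) (auto simp: interior_open open_Int open_halfspace_Re_gt open_halfspace_Re_lt)
  define W where "W = {s::complex. 0 < Re s \<and> Re s < 1}"
  define F where "F = at (0::complex) within W"
  have F: "F \<noteq> bot"
  proof -
    have "0 islimpt W"
      unfolding islimpt_approachable
    proof (intro allI impI)
      fix e :: real assume e: "e > 0"
      show "\<exists>x'\<in>W. x' \<noteq> 0 \<and> dist x' 0 < e"
        by (rule bexI[of _ "of_real (min (e/2) (1/2))"]) (use e in \<open>auto simp: W_def\<close>)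
    qed
    then show ?thesis unfolding F_def using trivial_limit_within by blast
  qed
  have lim1: "(A \<longlongrightarrow> A 0) F" unfolding F_def
    using \<open>isCont A 0\<close> by (simp add: isCont_def tendsto_within_subset[OF _ subset_UNIV])
  define h where "h = (\<lambda>s::complex. inverse (rGamma (s + 1)))"
  have d1: "(rGamma has_field_derivative euler_mascheroni) (at (0 + 1::complex))"
    using rGamma_deriv1 by simp
  have g1: "((\<lambda>s. rGamma (s + 1)) has_field_derivative euler_mascheroni * (1 + 0)) (at (0::complex))"
    by (rule DERIV_chain2[OF d1 DERIV_add[OF DERIV_ident DERIV_const]])
  have hd: "(h has_field_derivative - euler_mascheroni) (at 0)"
    unfolding h_def using DERIV_inverse'[OF g1] by simp
  then have "((\<lambda>y. (h y - h 0) / (y - 0)) \<longlongrightarrow> - euler_mascheroni) (at 0)"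
    by (simp add: has_field_derivative_iff)
  then have lim2: "((\<lambda>y. (h y - 1) / y) \<longlongrightarrow> - euler_mascheroni) F"
    unfolding F_def h_def by (auto intro: tendsto_within_subset)
  have eqA: "A s = (h s - 1) / s" if s: "s \<in> W" for s
  proof -
    have s0: "Re s > 0" "s \<noteq> 0" using s by (auto simp: W_def)
    have Gi: "((\<lambda>t. of_real t powr (s - 1) / of_real (exp t)) has_integral Gamma s) {0..}"
      by (rule Gamma_integral_complex) (use s0 in auto)
    have e1: "of_real t powr (s - 1) / of_real (exp t) = of_real t powr (s - 1) * complex_of_real (exp (- t))" for t
      by (simp add: exp_minus divide_inverse)
    have cE: "continuous_on {0<..1} (\<lambda>t. complex_of_real (exp (- t)))" by (intro continuous_intros)
    have bE: "norm (complex_of_real (exp (- t))) \<le> 1 * t powr 0" if "0 < t" for t using that by simp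
    have i01: "(\<lambda>t. of_real t powr (s - 1) * complex_of_real (exp (- t))) integrable_on {0..1}"
      using mellin01_bound(1)[OF cE bE, of s 1] s0 by simp
    have i1: "(\<lambda>t. of_real t powr (s - 1) * complex_of_real (exp (- t))) integrable_on {1..}"
      by (rule mellin1inf_bound(1)[OF cB bB]) (use s W_def in auto)
    have "((\<lambda>t. of_real t powr (s - 1) * complex_of_real (exp (- t))) has_integral
        (integral {0..1} (\<lambda>t. of_real t powr (s - 1) * complex_of_real (exp (- t))) +
         integral {1..} (\<lambda>t. of_real t powr (s - 1) * complex_of_real (exp (- t))))) ({0..1} \<union> {1..})"
      by (rule has_integral_Un[OF integrable_integral[OF i01] integrable_integral[OF i1]])
         (auto intro: negligible_subset[of "{1}"])
    moreover have "{0..1} \<union> {1..} = {0::real..}" by auto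
    ultimately have "((\<lambda>t. of_real t powr (s - 1) * complex_of_real (exp (- t))) has_integral
        (integral {0..1} (\<lambda>t. of_real t powr (s - 1) * complex_of_real (exp (- t))) +
         integral {1..} (\<lambda>t. of_real t powr (s - 1) * complex_of_real (exp (- t))))) {0..}" by simp
    moreover have "((\<lambda>t. of_real t powr (s - 1) * complex_of_real (exp (- t))) has_integral Gamma s) {0..}"
      using Gi unfolding e1 .
    ultimately have G1: "Gamma s = integral {0..1} (\<lambda>t. of_real t powr (s - 1) * complex_of_real (exp (- t))) +
         integral {1..} (\<lambda>t. of_real t powr (s - 1) * complex_of_real (exp (- t)))"
      using has_integral_unique by blast
    have p1: "((\<lambda>t. of_real t powr (s - 1)) has_integral 1 / s) {0..1}"
      by (rule mellin_power) (use s0 in auto)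
    have iA: "(\<lambda>t. of_real t powr (s - 1) * (of_real (exp (- t)) - 1)) integrable_on {0..1}"
      by (rule mellin01_bound(1)[OF cA bA]) (use s0 in auto)
    have "((\<lambda>t. of_real t powr (s - 1) * (of_real (exp (- t)) - 1) + of_real t powr (s - 1)) has_integral
        (integral {0..1} (\<lambda>t. of_real t powr (s - 1) * (of_real (exp (- t)) - 1)) + 1 / s)) {0..1}"
      by (rule has_integral_add[OF integrable_integral[OF iA] p1])
    then have "integral {0..1} (\<lambda>t. of_real t powr (s - 1) * complex_of_real (exp (- t))) =
        integral {0..1} (\<lambda>t. of_real t powr (s - 1) * (of_real (exp (- t)) - 1)) + 1 / s"
      by (simp add: algebra_simps integral_unique)
    with G1 have "A s = Gamma s - 1 / s" unfolding A_def by simp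
    also have "Gamma s = inverse (s * rGamma (s + 1))"
      using rGamma_inverse_Gamma[of s] rGamma_plus1[of s] by (metis inverse_inverse_eq)
    also have "inverse (s * rGamma (s + 1)) - 1 / s = (h s - 1) / s"
      unfolding h_def using s0 by (simp add: field_simps)
    finally show ?thesis .
  qed
  have evA: "eventually (\<lambda>s. (h s - 1) / s = A s) F"
    unfolding F_def eventually_at_filter by (rule always_eventually) (use eqA in auto)
  have lim3: "(A \<longlongrightarrow> - euler_mascheroni) F"
    by (rule Lim_transform_eventually[OF lim2 evA])
  have "A 0 = - euler_mascheroni" by (rule tendsto_unique[OF F lim1 lim3])
  then show ?thesis unfolding A_def c0_def by simp
qed


lemma zero_by_bound_lim':
  fixes D :: complex
  assumes a: "a > 0" and d: "\<delta> > 0" and b: "\<And>e. 0 < e \<Longrightarrow> e \<le> \<delta> \<Longrightarrow> norm D \<le> K * e powr a"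
  shows "D = 0"
proof -
  define \<epsilon> where "\<epsilon> = (\<lambda>n::nat. inverse (real n + 2))"
  have eps: "0 < \<epsilon> n" for n unfolding \<epsilon>_def by auto
  have lim0: "\<epsilon> \<longlonglongrightarrow> 0" unfolding \<epsilon>_def by (rule inverse_plus2_lim)
  have lim: "(\<lambda>n. K * \<epsilon> n powr a) \<longlonglongrightarrow> K * 0 powr a"
    using a by (intro tendsto_intros lim0) (auto simp: \<epsilon>_def intro!: always_eventually)
  have ev: "eventually (\<lambda>n. \<epsilon> n < \<delta>) sequentially"
    using order_tendstoD(2)[OF lim0 d] .
  have "norm D \<le> K * 0 powr a"
    by (rule tendsto_le[OF trivial_limit_sequentially lim tendsto_const])
       (use ev in \<open>eventually_elim\<close>, use b eps in auto)
  then show ?thesis by simp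
qed

lemma cpowr_m1: "t > 0 \<Longrightarrow> complex_of_real t powr (-1) = complex_of_real (1 / t)"
proof -
  assume t: "t > 0"
  have "complex_of_real t powr complex_of_real (-1) = complex_of_real (t powr (-1))"
    using t by (intro powr_of_real) auto
  then show ?thesis using t by (simp add: powr_minus_divide)
qed

lemma m1inf0:
  fixes R :: "real \<Rightarrow> complex"
  assumes cont: "continuous_on {1..} R"
    and bnd: "\<And>t. 1 \<le> t \<Longrightarrow> norm (R t) \<le> C * t powr (-\<rho>)"
    and pos: "0 < \<rho>" and T: "1 \<le> T"
  shows "(\<lambda>t. of_real t powr (-1) * R t) integrable_on {T..}"
    and "norm (integral {T..} (\<lambda>t. of_real t powr (-1) * R t)) \<le> C * (T powr (- \<rho>) / \<rho>)"
  using mellin1inf_bound[OF cont bnd _ T, of 0] pos by simp_all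

lemma m01_0:
  fixes R :: "real \<Rightarrow> complex"
  assumes cont: "continuous_on {0<..1} R"
    and bnd: "\<And>t. 0 < t \<Longrightarrow> t \<le> 1 \<Longrightarrow> norm (R t) \<le> C * t powr \<mu>"
    and pos: "\<mu> > 0" and e: "0 \<le> e" "e \<le> 1"
  shows "(\<lambda>t. of_real t powr (-1) * R t) integrable_on {0..e}"
    and "norm (integral {0..e} (\<lambda>t. of_real t powr (-1) * R t)) \<le> C * (e powr \<mu> / \<mu>)"
  using mellin01_bound[OF cont bnd _ e, of 0] pos by simp_all

lemma subst_aff:
  assumes l: "l > 0" and T: "T \<ge> 1"
  shows "integral {1..T} (\<lambda>t. of_real t powr (-1) * complex_of_real (exp (- l * t)))
       = integral {l..l*T} (\<lambda>u. of_real u powr (-1) * complex_of_real (exp (- u)))"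
proof -
  define g where "g = (\<lambda>u. of_real u powr (-1) * complex_of_real (exp (- u)))"
  have lT: "l \<le> l * T" using l T by simp
  have gc: "continuous_on (cbox l (l * T)) g"
    unfolding g_def cbox_interval
    by (intro continuous_on_mult continuous_intros continuous_on_subset[OF cpowr_cont]) (use l in auto)
  have gi: "(g has_integral integral (cbox l (l*T)) g) (cbox l (l*T))"
    by (rule integrable_integral[OF integrable_continuous[OF gc]])
  have l0: "l \<noteq> 0" using l by simp
  from has_integral_affinity[OF gi l0, of 0]
  have "((\<lambda>x. g (l * x)) has_integral (1 / l) * integral {l..l*T} g) ((\<lambda>x. (1 / l) * x) ` {l..l*T})"
    using l by (simp add: cbox_interval scaleR_conv_of_real)
  moreover have "(\<lambda>x. (1 / l) * x) ` {l..l*T} = {1..T}"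
    using l by (subst image_mult_atLeastAtMost) auto
  ultimately have h1: "((\<lambda>x. g (l * x)) has_integral (1 / l) * integral {l..l*T} g) {1..T}" by simp
  have h2: "((\<lambda>x. complex_of_real l * g (l * x)) has_integral integral {l..l*T} g) {1..T}"
    using has_integral_mult_right[OF h1, of "complex_of_real l"] l by simp
  have h3: "((\<lambda>t. of_real t powr (-1) * complex_of_real (exp (- l * t))) has_integral integral {l..l*T} g) {1..T}"
  proof (rule has_integral_eq[OF _ h2])
    fix x assume x: "x \<in> {1..T}"
    then have x0: "x > 0" by auto
    have e1: "complex_of_real (l * x) powr (-1) = complex_of_real (1 / (l * x))"
      by (rule cpowr_m1) (use x0 l in simp)
    show "complex_of_real l * g (l * x) = of_real x powr (-1) * complex_of_real (exp (- l * x))"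
      unfolding g_def e1 using x0 l by (simp add: cpowr_m1 field_simps)
  qed
  then show ?thesis unfolding g_def by (rule integral_unique)
qed

lemma E1_key:
  assumes l: "0 < l" "l < 1"
  shows "integral {1..} (\<lambda>t. of_real t powr (-1) * complex_of_real (exp (- l * t))) + of_real (ln l)
       = integral {l..1} (\<lambda>u. of_real u powr (-1) * (complex_of_real (exp (- u)) - 1))
       + integral {1..} (\<lambda>u. of_real u powr (-1) * complex_of_real (exp (- u)))"
proof -
  define g where "g = (\<lambda>u. of_real u powr (-1) * complex_of_real (exp (- u)))"
  define h where "h = (\<lambda>t. of_real t powr (-1) * complex_of_real (exp (- l * t)))"
  have cg: "continuous_on {1..} (\<lambda>u. complex_of_real (exp (- u)))" by (intro continuous_intros)
  have bg: "norm (complex_of_real (exp (- u))) \<le> 1 * u powr (- 1)" if "1 \<le> u" for u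
    using bnd_exp_inf[of 1 u] that by simp
  have ch: "continuous_on {1..} (\<lambda>t. complex_of_real (exp (- l * t)))" by (intro continuous_intros)
  have bh: "norm (complex_of_real (exp (- l * t))) \<le> (1 / l) * t powr (- 1)" if "1 \<le> t" for t
    using bnd_exp_inf[of l t] that l by simp
  have gcont: "continuous_on {a..b} g" if "a > 0" for a b
    unfolding g_def by (intro continuous_on_mult continuous_intros continuous_on_subset[OF cpowr_cont]) (use that in auto)
  have hcont: "continuous_on {a..b} h" if "a > 0" for a b
    unfolding h_def by (intro continuous_on_mult continuous_intros continuous_on_subset[OF cpowr_cont]) (use that in auto)
  have K1: "integral {1..} h = integral {l..} g"
  proof -
    have "integral {1..} h - integral {l..} g = 0"
    proof (rule zero_by_bound_lim'[where a = 1 and \<delta> = l and K = "2 / l"])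
      fix e :: real assume e: "0 < e" "e \<le> l"
      define T where "T = 1 / e"
      have T1: "T \<ge> 1" using e l unfolding T_def by (simp add: field_simps)
      have lT: "l * T \<ge> 1" using e l unfolding T_def by (simp add: field_simps)
      have lT': "l \<le> l * T" using T1 l by simp
      have ih1: "h integrable_on {T..}" unfolding h_def by (rule m1inf0(1)[OF ch bh zero_less_one T1])
      have ig1: "g integrable_on {l*T..}" unfolding g_def by (rule m1inf0(1)[OF cg bg zero_less_one lT])
      have s1: "integral {1..} h = integral {1..T} h + integral {T..} h"
        by (rule integral_split_Ici[OF integrable_continuous_interval[OF hcont] ih1 T1]) simp
      have s2: "integral {l..} g = integral {l..l*T} g + integral {l*T..} g"
        by (rule integral_split_Ici[OF integrable_continuous_interval[OF gcont] ig1 lT']) (use l in simp)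
      have s3: "integral {1..T} h = integral {l..l*T} g"
        unfolding h_def g_def by (rule subst_aff[OF l(1) T1])
      have n1: "norm (integral {T..} h) \<le> (1 / l) * (T powr (- 1) / 1)"
        unfolding h_def by (rule m1inf0(2)[OF ch bh zero_less_one T1])
      have n2: "norm (integral {l*T..} g) \<le> 1 * ((l * T) powr (- 1) / 1)"
        unfolding g_def by (rule m1inf0(2)[OF cg bg zero_less_one lT])
      have "integral {1..} h - integral {l..} g = integral {T..} h - integral {l*T..} g"
        using s1 s2 s3 by simp
      then have "norm (integral {1..} h - integral {l..} g) \<le> norm (integral {T..} h) + norm (integral {l*T..} g)"
        by (simp add: norm_triangle_ineq4)
      also have "\<dots> \<le> (1 / l) * (T powr (- 1) / 1) + 1 * ((l * T) powr (- 1) / 1)"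
        using n1 n2 by simp
      also have "\<dots> = (2 / l) * e powr 1"
        using e l T1 unfolding T_def by (simp add: powr_minus_divide field_simps)
      finally show "norm (integral {1..} h - integral {l..} g) \<le> (2 / l) * e powr 1" .
    qed (use l in auto)
    then show ?thesis by simp
  qed
  have ig: "g integrable_on {1..}" unfolding g_def by (rule m1inf0(1)[OF cg bg]) auto
  have K2: "integral {l..} g = integral {l..1} g + integral {1..} g"
    by (rule integral_split_Ici[OF integrable_continuous_interval[OF gcont] ig]) (use l in auto)
  have ftc: "((\<lambda>u. of_real u powr (-1) :: complex) has_integral (Ln (of_real 1) - Ln (of_real l))) {l..1}"
  proof (rule fundamental_theorem_of_calculus)
    show "l \<le> 1" using l by simp
    fix x assume x: "x \<in> {l..1}"
    then have x0: "x > 0" using l by auto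
    have "(Ln has_field_derivative inverse (complex_of_real x)) (at (complex_of_real x))"
      by (rule has_field_derivative_Ln) (use x0 in \<open>auto simp: nonpos_Reals_def\<close>)
    then have "((\<lambda>u. Ln (complex_of_real u)) has_vector_derivative inverse (complex_of_real x)) (at x within {l..1})"
      by (rule has_vector_derivative_real_field)
    then show "((\<lambda>u. Ln (complex_of_real u)) has_vector_derivative of_real x powr (-1)) (at x within {l..1})"
      using x0 by (simp add: cpowr_m1 inverse_eq_divide)
  qed
  have if01: "(\<lambda>u. of_real u powr (-1) * (complex_of_real (exp (- u)) - 1)) integrable_on {l..1}"
    by (rule integrable_continuous_interval, intro continuous_on_mult continuous_intros continuous_on_subset[OF cpowr_cont]) (use l in auto)
  have "((\<lambda>u. of_real u powr (-1) * (complex_of_real (exp (- u)) - 1) + of_real u powr (-1)) has_integral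
       (integral {l..1} (\<lambda>u. of_real u powr (-1) * (complex_of_real (exp (- u)) - 1)) + (Ln (of_real 1) - Ln (of_real l)))) {l..1}"
    by (rule has_integral_add[OF integrable_integral[OF if01] ftc])
  then have K3: "integral {l..1} g = integral {l..1} (\<lambda>u. of_real u powr (-1) * (complex_of_real (exp (- u)) - 1)) - of_real (ln l)"
    unfolding g_def using l by (simp add: algebra_simps integral_unique Ln_of_real)
  show ?thesis using K1 K2 K3 unfolding h_def g_def by simp
qed


lemma E1_lim:
  "((\<lambda>l. integral {1..} (\<lambda>t. of_real t powr (-1) * complex_of_real (exp (- l * t))) + of_real (ln l))
     \<longlongrightarrow> - euler_mascheroni) (at_right 0)"
proof -
  define f01 where "f01 = (\<lambda>u. of_real u powr (-1) * (complex_of_real (exp (- u)) - 1))"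
  define E where "E = (\<lambda>l. integral {1..} (\<lambda>t. of_real t powr (-1) * complex_of_real (exp (- l * t))) + of_real (ln l))"
  have cA: "continuous_on {0<..1} (\<lambda>t. complex_of_real (exp (- t)) - 1)" by (intro continuous_intros)
  have bA: "norm (complex_of_real (exp (- t)) - 1) \<le> 1 * t powr 1" if "0 < t" "t \<le> 1" for t
    using bnd_exp_01[of t] that by simp
  have i01: "f01 integrable_on {0..1}" unfolding f01_def by (rule m01_0(1)[OF cA bA]) auto
  have c0': "c0 = integral {0..1} f01 + integral {1..} (\<lambda>u. of_real u powr (-1) * complex_of_real (exp (- u)))"
    unfolding c0_def f01_def by simp
  have ev: "eventually (\<lambda>l. norm (E l - (- euler_mascheroni)) \<le> l) (at_right 0)"
    using eventually_at_right_real[OF zero_less_one]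
  proof eventually_elim
    case (elim l)
    then have l: "0 < l" "l < 1" by auto
    have "integral {0..l} f01 + integral {l..1} f01 = integral {0..1} f01"
      by (rule Henstock_Kurzweil_Integration.integral_combine) (use l i01 in auto)
    then have "E l - (- euler_mascheroni) = - integral {0..l} f01"
      unfolding E_def E1_key[OF l] c0_eq[symmetric] c0' f01_def[symmetric] by (simp add: algebra_simps)
    then have "norm (E l - (- euler_mascheroni)) = norm (integral {0..l} f01)" by simp
    also have "\<dots> \<le> 1 * (l powr 1 / 1)" unfolding f01_def by (rule m01_0(2)[OF cA bA]) (use l in auto)
    finally show ?case using l by simp
  qed
  have "((\<lambda>l. E l - (- euler_mascheroni)) \<longlongrightarrow> 0) (at_right 0)"
    by (rule Lim_null_comparison[OF ev]) (intro tendsto_ident_at)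
  then have "(E \<longlongrightarrow> - euler_mascheroni) (at_right 0)"
    by (subst Lim_null) simp
  then show ?thesis unfolding E_def .
qed

definition taylor :: "nat \<Rightarrow> real \<Rightarrow> real" where
  "taylor K x = (\<Sum>k<K. (- x) ^ k / fact k)"

lemma taylor_exp_bound:
  fixes x :: real
  assumes x: "0 \<le> x" "x \<le> 1"
  shows "\<bar>exp (- x) - taylor K x\<bar> \<le> exp 1 * x ^ K / fact K"
proof -
  obtain t where t: "\<bar>t\<bar> \<le> \<bar>- x\<bar>" and e: "exp (- x) = (\<Sum>m<K. (- x) ^ m / fact m) + exp t / fact K * (- x) ^ K"
    using Maclaurin_exp_le[of "- x" K] by blast
  have "\<bar>exp (- x) - taylor K x\<bar> = exp t / fact K * x ^ K"
    unfolding taylor_def e by (simp add: abs_mult power_abs x)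
  also have "\<dots> \<le> exp 1 / fact K * x ^ K"
    using t x by (intro mult_right_mono divide_right_mono) auto
  finally show ?thesis by simp
qed

lemma expm1_powr_bound:
  fixes x \<sigma> :: real
  assumes x: "0 \<le> x" and s: "0 < \<sigma>" "\<sigma> \<le> 1"
  shows "\<bar>exp (- x) - 1\<bar> \<le> x powr \<sigma>"
proof (cases "x \<le> 1")
  case True
  have "\<bar>exp (- x) - 1\<bar> \<le> x" by (rule exp_minus_diff_le[OF x])
  also have "x \<le> x powr \<sigma>"
  proof (cases "x = 0")
    case False
    then have "x powr 1 \<le> x powr \<sigma>" using True x s by (intro powr_mono') auto
    then show ?thesis using False x by simp
  qed simp
  finally show ?thesis .
next
  case False
  have "\<bar>exp (- x) - 1\<bar> \<le> 1" using x by (simp add: abs_if)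
  also have "1 \<le> x powr \<sigma>" using False s by (simp add: ge_one_powr_ge_zero)
  finally show ?thesis .
qed

lemma expand_ok_mono:
  assumes "expand_ok \<phi> xs C M'" "M \<le> M'"
  shows "expand_ok \<phi> xs (max C 0) M"
  unfolding expand_ok_def
proof (intro allI impI)
  fix t :: real assume t: "0 < t" "t \<le> 1"
  have "norm (\<phi> t - psum xs t) \<le> C * t powr M'" using assms(1) t by (simp add: expand_ok_def)
  also have "\<dots> \<le> max C 0 * t powr M'" by (intro mult_right_mono) auto
  also have "\<dots> \<le> max C 0 * t powr M" using t assms(2) by (intro mult_left_mono powr_mono') auto
  finally show "norm (\<phi> t - psum xs t) \<le> max C 0 * t powr M" .
qed

lemma sum_list_upt_sum: "(\<Sum>k\<leftarrow>[0..<K]. f k) = (\<Sum>k<K. f k)"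
  by (simp add: sum_set_upt_conv_sum_list_nat[symmetric] atLeast0LessThan)

lemma sum_list_concat_upt:
  "(\<Sum>p\<leftarrow>concat (map (\<lambda>j. map (g j) [0..<K]) [0..<N]). F p) = (\<Sum>j<N. \<Sum>k<K. F (g j k))"
proof (induction N)
  case 0 then show ?case by simp
next
  case (Suc N)
  have "(\<Sum>p\<leftarrow>concat (map (\<lambda>j. map (g j) [0..<K]) [0..<Suc N]). F p)
      = (\<Sum>p\<leftarrow>concat (map (\<lambda>j. map (g j) [0..<K]) [0..<N]). F p) + (\<Sum>k\<leftarrow>[0..<K]. F (g N k))"
    by (simp add: o_def)
  also have "\<dots> = (\<Sum>j<N. \<Sum>k<K. F (g j k)) + (\<Sum>k<K. F (g N k))"
    by (simp add: Suc.IH sum_list_upt_sum)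
  finally show ?case by simp
qed

lemma psum_theta: "psum (map (\<lambda>j. (a j, \<alpha> j)) [0..<N]) t = (\<Sum>j<N. a j * of_real (t powr \<alpha> j))"
  by (simp add: psum_def o_def sum_list_upt_sum)

definition xslam :: "(nat \<Rightarrow> complex) \<Rightarrow> (nat \<Rightarrow> real) \<Rightarrow> real \<Rightarrow> nat \<Rightarrow> nat \<Rightarrow> (complex \<times> real) list" where
  "xslam a \<alpha> l N K = concat (map (\<lambda>j. map (\<lambda>k. (a j * (- of_real l) ^ k / fact k, \<alpha> j + real k)) [0..<K]) [0..<N])"

lemma psum_lam:
  assumes t: "t > 0"
  shows "psum (xslam a \<alpha> l N K) t = (\<Sum>j<N. a j * of_real (t powr \<alpha> j) * of_real (taylor K (l * t)))"
proof -
  have "psum (xslam a \<alpha> l N K) t = (\<Sum>j<N. \<Sum>k<K. a j * (- of_real l) ^ k / fact k * of_real (t powr (\<alpha> j + real k)))"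
    unfolding psum_def xslam_def by (subst sum_list_concat_upt) simp
  also have "\<dots> = (\<Sum>j<N. a j * of_real (t powr \<alpha> j) * of_real (taylor K (l * t)))"
  proof (rule sum.cong[OF refl])
    fix j
    have "(\<Sum>k<K. a j * (- of_real l) ^ k / fact k * of_real (t powr (\<alpha> j + real k)))
        = (\<Sum>k<K. a j * of_real (t powr \<alpha> j) * of_real ((- (l * t)) ^ k / fact k))"
    proof (rule sum.cong[OF refl])
      fix k
      have "t powr (\<alpha> j + real k) = t powr \<alpha> j * t ^ k" using t by (simp add: powr_add powr_realpow)
      then show "a j * (- of_real l) ^ k / fact k * of_real (t powr (\<alpha> j + real k))
          = a j * of_real (t powr \<alpha> j) * of_real ((- (l * t)) ^ k / fact k)"
        by (simp add: power_mult_distrib power_minus[of "l * t"] power_minus[of "complex_of_real l"] field_simps)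
    qed
    also have "\<dots> = a j * of_real (t powr \<alpha> j) * of_real (taylor K (l * t))"
      unfolding taylor_def by (simp add: sum_distrib_left)
    finally show "(\<Sum>k<K. a j * (- of_real l) ^ k / fact k * of_real (t powr (\<alpha> j + real k))) = a j * of_real (t powr \<alpha> j) * of_real (taylor K (l * t))" .
  qed
  finally show ?thesis .
qed

locale setting =
  fixes \<theta> :: "real \<Rightarrow> complex" and a :: "nat \<Rightarrow> complex" and \<alpha> :: "nat \<Rightarrow> real"
    and b0 :: complex and \<rho> :: real
  assumes cont: "continuous_on {0<..} \<theta>"
    and mono: "strict_mono \<alpha>"
    and unbounded: "filterlim \<alpha> at_top sequentially"
    and small_t: "\<And>N. (\<lambda>t. norm (\<theta> t - (\<Sum>j<N. a j * complex_of_real (t powr \<alpha> j))))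
                        \<in> O[at_right 0](\<lambda>t. t powr \<alpha> N)"
    and rho_pos: "\<rho> > 0"
    and large_t: "(\<lambda>t. norm (\<theta> t - b0)) \<in> O[at_top](\<lambda>t. t powr (- \<rho>))"

context setting
begin

abbreviation XT :: "nat \<Rightarrow> (complex \<times> real) list" where
  "XT N \<equiv> map (\<lambda>j. (a j, \<alpha> j)) [0..<N]"

lemma cont01: "continuous_on {0<..1} \<theta>"
  by (rule continuous_on_subset[OF cont]) auto

lemma cont1: "continuous_on {1..} \<theta>"
  by (rule continuous_on_subset[OF cont]) auto

lemma psum_cont_XT: "continuous_on {0<..1} (\<lambda>t. \<theta> t - psum (XT N) t)"
  by (rule rem_cont[OF cont01])

lemma exp_theta: "\<exists>C. C \<ge> 0 \<and> expand_ok \<theta> (XT N) C (\<alpha> N)"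
proof -
  have O: "(\<lambda>t. norm (\<theta> t - psum (XT N) t)) \<in> O[at_right 0](\<lambda>t. t powr \<alpha> N)"
    using small_t[of N] by (simp add: psum_theta)
  obtain C where C: "\<forall>t. 0 < t \<longrightarrow> t \<le> 1 \<longrightarrow> norm (\<theta> t - psum (XT N) t) \<le> C * t powr \<alpha> N"
    using bound_from_bigo_0[OF psum_cont_XT O] by blast
  then have "expand_ok \<theta> (XT N) C (\<alpha> N)" unfolding expand_ok_def by blast
  then have "expand_ok \<theta> (XT N) (max C 0) (\<alpha> N)" by (rule expand_ok_mono) simp
  then show ?thesis by (intro exI[of _ "max C 0"]) auto
qed

lemma b0_theta: "\<exists>C0. \<forall>t. 0 < t \<longrightarrow> t \<le> 1 \<longrightarrow> norm (\<theta> t) \<le> C0 * t powr \<alpha> 0"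
proof -
  obtain C where "expand_ok \<theta> (XT 0) C (\<alpha> 0)" using exp_theta by blast
  then show ?thesis unfolding expand_ok_def by auto
qed

lemma alpha_mono: "j \<le> k \<Longrightarrow> \<alpha> j \<le> \<alpha> k"
  using mono by (simp add: strict_mono_less_eq)

lemma alpha_big: "\<exists>N. \<alpha> N \<ge> M"
proof -
  have "eventually (\<lambda>n. M \<le> \<alpha> n) sequentially"
    using unbounded by (simp add: filterlim_at_top)
  then show ?thesis unfolding eventually_sequentially by auto
qed

lemma exps_theta: "\<exists>xs C. expand_ok \<theta> xs C M"
proof -
  obtain N where N: "\<alpha> N \<ge> M" using alpha_big by blast
  obtain C where "expand_ok \<theta> (XT N) C (\<alpha> N)" using exp_theta by blast
  then have "expand_ok \<theta> (XT N) (max C 0) M" by (rule expand_ok_mono) (rule N)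
  then show ?thesis by blast
qed

lemma large_bound: "\<exists>C. C \<ge> 0 \<and> (\<forall>t. 1 \<le> t \<longrightarrow> norm (\<theta> t - b0) \<le> C * t powr (- \<rho>))"
proof -
  have c: "continuous_on {1..} (\<lambda>t. \<theta> t - b0)" by (intro continuous_intros cont1)
  obtain C where C: "\<forall>t. 1 \<le> t \<longrightarrow> norm (\<theta> t - b0) \<le> C * t powr (- \<rho>)"
    using bound_from_bigo_inf[OF c large_t] by blast
  have "norm (\<theta> 1 - b0) \<le> C" using C by auto
  then have "C \<ge> 0" using norm_ge_zero order_trans by blast
  then show ?thesis using C by blast
qed


abbreviation TL :: "real \<Rightarrow> real \<Rightarrow> complex" where
  "TL l \<equiv> (\<lambda>t. complex_of_real (exp (- l * t)) * \<theta> t)"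

lemma lam_diff:
  assumes l: "0 < l" "l \<le> 1" and K: "K \<ge> 1" and CN: "expand_ok \<theta> (XT N) CN (\<alpha> N)" "CN \<ge> 0"
    and M: "M \<le> \<alpha> N" "M \<le> \<alpha> 0 + real K" and t: "0 < t" "t \<le> 1"
  shows "norm ((TL l t - psum (xslam a \<alpha> l N K) t) - (\<theta> t - psum (XT N) t))
           \<le> l * (CN + exp 1 * (\<Sum>j<N. norm (a j))) * t powr M"
proof -
  define E where "E = exp (- (l * t))"
  define T where "T = taylor K (l * t)"
  define P where "P = (\<Sum>j<N. a j * of_real (t powr \<alpha> j))"
  define R where "R = \<theta> t - P"
  have PX: "psum (XT N) t = P" unfolding P_def by (rule psum_theta)
  have PL: "psum (xslam a \<alpha> l N K) t = (\<Sum>j<N. a j * of_real (t powr \<alpha> j) * of_real T)"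
    unfolding T_def by (rule psum_lam[OF t(1)])
  have sums: "(\<Sum>j<N. a j * of_real (t powr \<alpha> j) * (of_real E - of_real T))
      = of_real E * P - (\<Sum>j<N. a j * of_real (t powr \<alpha> j) * of_real T)"
  proof -
    have "(\<Sum>j<N. a j * of_real (t powr \<alpha> j) * (of_real E - of_real T))
        = (\<Sum>j<N. a j * of_real (t powr \<alpha> j) * of_real E - a j * of_real (t powr \<alpha> j) * of_real T)"
      by (simp add: right_diff_distrib)
    also have "\<dots> = (\<Sum>j<N. a j * of_real (t powr \<alpha> j) * of_real E) - (\<Sum>j<N. a j * of_real (t powr \<alpha> j) * of_real T)"
      by (rule sum_subtractf)
    also have "(\<Sum>j<N. a j * of_real (t powr \<alpha> j) * of_real E) = P * of_real E"
      unfolding P_def by (rule sum_distrib_right[symmetric])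
    finally show ?thesis by (simp add: mult.commute)
  qed
  have ident: "(TL l t - psum (xslam a \<alpha> l N K) t) - (\<theta> t - psum (XT N) t)
      = (of_real E - 1) * R + (\<Sum>j<N. a j * of_real (t powr \<alpha> j) * (of_real E - of_real T))"
  proof -
    have "(TL l t - psum (xslam a \<alpha> l N K) t) - (\<theta> t - psum (XT N) t)
      = (of_real E - 1) * R + (of_real E * P - (\<Sum>j<N. a j * of_real (t powr \<alpha> j) * of_real T))"
      unfolding PX PL R_def E_def by (simp add: algebra_simps)
    then show ?thesis by (simp only: sums)
  qed
  have Rb: "norm R \<le> CN * t powr \<alpha> N" using CN(1) t unfolding R_def PX[symmetric] by (simp add: expand_ok_def)
  have tM: "t powr \<alpha> N \<le> t powr M" using t M by (intro powr_mono') auto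
  have Eb: "\<bar>E - 1\<bar> \<le> l"
  proof -
    have "\<bar>E - 1\<bar> \<le> l * t" unfolding E_def by (rule exp_minus_diff_le) (use l t in simp)
    also have "\<dots> \<le> l" using l t by (simp add: mult_le_cancel_left1)
    finally show ?thesis .
  qed
  have n1: "norm ((of_real E - 1) * R) \<le> l * CN * t powr M"
  proof -
    have "norm ((of_real E - 1) * R) = \<bar>E - 1\<bar> * norm R"
      by (metis norm_mult norm_of_real of_real_1 of_real_diff)
    also have "\<dots> \<le> l * (CN * t powr \<alpha> N)" by (intro mult_mono Eb Rb) (use l in auto)
    also have "\<dots> \<le> l * (CN * t powr M)" using tM CN(2) l by (intro mult_left_mono) auto
    finally show ?thesis by simp
  qed
  have ET: "\<bar>E - T\<bar> \<le> exp 1 * l * t ^ K"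
  proof -
    have "\<bar>E - T\<bar> \<le> exp 1 * (l * t) ^ K / fact K"
      unfolding E_def T_def by (rule taylor_exp_bound) (use l t in \<open>auto simp: mult_le_one\<close>)
    also have "\<dots> \<le> exp 1 * (l * t) ^ K / 1"
      by (rule divide_left_mono) (use l t in \<open>auto simp: fact_ge_1\<close>)
    also have "(l * t) ^ K = l ^ K * t ^ K" by (simp add: power_mult_distrib)
    also have "l ^ K \<le> l" using l K power_decreasing[of 1 K l] by simp
    then have "exp 1 * (l ^ K * t ^ K) \<le> exp 1 * (l * t ^ K)" using t by (intro mult_left_mono mult_right_mono) auto
    finally show ?thesis by (simp add: mult.assoc)
  qed
  have n2: "norm (\<Sum>j<N. a j * of_real (t powr \<alpha> j) * (of_real E - of_real T)) \<le> (\<Sum>j<N. norm (a j) * (exp 1 * l * t powr M))"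
  proof -
    have "norm (\<Sum>j<N. a j * of_real (t powr \<alpha> j) * (of_real E - of_real T))
        \<le> (\<Sum>j<N. norm (a j * of_real (t powr \<alpha> j) * (of_real E - of_real T)))" by (rule norm_sum)
    also have "\<dots> \<le> (\<Sum>j<N. norm (a j) * (exp 1 * l * t powr M))"
    proof (rule sum_mono)
      fix j assume j: "j \<in> {..<N}"
      have "norm (a j * of_real (t powr \<alpha> j) * (of_real E - of_real T)) = norm (a j) * (t powr \<alpha> j * \<bar>E - T\<bar>)"
        by (simp add: norm_mult flip: of_real_diff)
      also have "\<dots> \<le> norm (a j) * (t powr \<alpha> j * (exp 1 * l * t ^ K))"
        by (intro mult_left_mono ET) auto
      also have "t powr \<alpha> j * (exp 1 * l * t ^ K) = exp 1 * l * t powr (\<alpha> j + real K)"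
        using t by (simp add: powr_add powr_realpow)
      also have "t powr (\<alpha> j + real K) \<le> t powr M"
        using t M alpha_mono[of 0 j] by (intro powr_mono') auto
      then have "norm (a j) * (exp 1 * l * t powr (\<alpha> j + real K)) \<le> norm (a j) * (exp 1 * l * t powr M)"
        using l by (intro mult_left_mono) auto
      finally show "norm (a j * of_real (t powr \<alpha> j) * (of_real E - of_real T)) \<le> norm (a j) * (exp 1 * l * t powr M)" .
    qed
    finally show ?thesis .
  qed
  have "norm ((TL l t - psum (xslam a \<alpha> l N K) t) - (\<theta> t - psum (XT N) t))
      \<le> norm ((of_real E - 1) * R) + norm (\<Sum>j<N. a j * of_real (t powr \<alpha> j) * (of_real E - of_real T))"
    unfolding ident by (rule norm_triangle_ineq)
  also have "\<dots> \<le> l * CN * t powr M + (\<Sum>j<N. norm (a j) * (exp 1 * l * t powr M))"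
    using n1 n2 by linarith
  also have "(\<Sum>j<N. norm (a j) * (exp 1 * l * t powr M)) = (\<Sum>j<N. norm (a j)) * (exp 1 * l * t powr M)"
    by (rule sum_distrib_right[symmetric])
  also have "l * CN * t powr M + (\<Sum>j<N. norm (a j)) * (exp 1 * l * t powr M) = l * (CN + exp 1 * (\<Sum>j<N. norm (a j))) * t powr M"
    by (simp add: algebra_simps)
  finally show ?thesis .
qed

lemma lam_exp:
  assumes l: "0 < l" "l \<le> 1" and K: "K \<ge> 1" and CN: "expand_ok \<theta> (XT N) CN (\<alpha> N)" "CN \<ge> 0"
    and M: "M \<le> \<alpha> N" "M \<le> \<alpha> 0 + real K"
  shows "expand_ok (TL l) (xslam a \<alpha> l N K) (CN + (CN + exp 1 * (\<Sum>j<N. norm (a j)))) M"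
  unfolding expand_ok_def
proof (intro allI impI)
  fix t :: real assume t: "0 < t" "t \<le> 1"
  define B where "B = CN + exp 1 * (\<Sum>j<N. norm (a j))"
  have B0: "B \<ge> 0" using CN(2) unfolding B_def by (intro add_nonneg_nonneg mult_nonneg_nonneg sum_nonneg) auto
  have d: "norm ((TL l t - psum (xslam a \<alpha> l N K) t) - (\<theta> t - psum (XT N) t)) \<le> l * B * t powr M"
    unfolding B_def by (rule lam_diff[OF l K CN M t])
  have r: "norm (\<theta> t - psum (XT N) t) \<le> CN * t powr M"
  proof -
    have "norm (\<theta> t - psum (XT N) t) \<le> CN * t powr \<alpha> N" using CN(1) t by (simp add: expand_ok_def)
    also have "\<dots> \<le> CN * t powr M" using t M CN(2) by (intro mult_left_mono powr_mono') auto
    finally show ?thesis .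
  qed
  have "norm (TL l t - psum (xslam a \<alpha> l N K) t)
     \<le> norm (\<theta> t - psum (XT N) t) + norm ((TL l t - psum (xslam a \<alpha> l N K) t) - (\<theta> t - psum (XT N) t))"
    by (rule norm_triangle_sub)
  also have "\<dots> \<le> CN * t powr M + l * B * t powr M" using r d by linarith
  also have "\<dots> \<le> CN * t powr M + 1 * B * t powr M"
    using l B0 by (intro add_left_mono mult_right_mono) auto
  finally show "norm (TL l t - psum (xslam a \<alpha> l N K) t) \<le> (CN + (CN + exp 1 * (\<Sum>j<N. norm (a j)))) * t powr M"
    unfolding B_def by (simp add: algebra_simps)
qed

lemma TL_cont01: "continuous_on {0<..1} (TL l)"
  by (intro continuous_intros cont01)

lemma TL_cont1: "continuous_on {1..} (TL l)"
  by (intro continuous_intros cont1)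

lemma TL_b0: "l \<ge> 0 \<Longrightarrow> \<exists>C0. \<forall>t. 0 < t \<longrightarrow> t \<le> 1 \<longrightarrow> norm (TL l t) \<le> C0 * t powr \<alpha> 0"
proof -
  assume l: "l \<ge> 0"
  obtain C0 where C0: "\<forall>t. 0 < t \<longrightarrow> t \<le> 1 \<longrightarrow> norm (\<theta> t) \<le> C0 * t powr \<alpha> 0" using b0_theta by blast
  have "norm (TL l t) \<le> C0 * t powr \<alpha> 0" if t: "0 < t" "t \<le> 1" for t
  proof -
    have "norm (TL l t) = exp (- l * t) * norm (\<theta> t)" by (simp add: norm_mult)
    also have "\<dots> \<le> 1 * norm (\<theta> t)" using l t by (intro mult_right_mono) auto
    also have "\<dots> \<le> C0 * t powr \<alpha> 0" using C0 t by simp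
    finally show ?thesis .
  qed
  then show ?thesis by blast
qed

lemma exps_TL:
  assumes l: "0 < l" "l \<le> 1"
  shows "\<exists>xs C. expand_ok (TL l) xs C M"
proof -
  obtain N where N: "\<alpha> N \<ge> M" using alpha_big by blast
  obtain CN where CN: "CN \<ge> 0" "expand_ok \<theta> (XT N) CN (\<alpha> N)" using exp_theta by blast
  define K where "K = nat \<lceil>M - \<alpha> 0\<rceil> + 1"
  have K: "K \<ge> 1" "M \<le> \<alpha> 0 + real K" unfolding K_def by linarith+
  show ?thesis using lam_exp[OF l K(1) CN(2) CN(1) N K(2)] by blast
qed

end

context setting
begin

lemma b0_TL_inf:
  assumes l: "l > 0" and CL: "CL \<ge> 0" "\<And>t. 1 \<le> t \<Longrightarrow> norm (\<theta> t - b0) \<le> CL * t powr (- \<rho>)"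
    and t: "1 \<le> t"
  shows "norm (TL l t - 0) \<le> ((norm b0 + CL) / l) * t powr (- 1)"
proof -
  have "norm (\<theta> t) \<le> norm b0 + norm (\<theta> t - b0)" by (metis add.commute diff_add_cancel norm_triangle_ineq)
  also have "norm (\<theta> t - b0) \<le> CL * t powr (- \<rho>)" by (rule CL(2)[OF t])
  also have "CL * t powr (- \<rho>) \<le> CL * 1"
    using t rho_pos CL(1) by (intro mult_left_mono) (auto simp: powr_le_one_le ge_one_powr_ge_zero powr_minus_divide)
  finally have th: "norm (\<theta> t) \<le> norm b0 + CL" by simp
  have e: "exp (- l * t) \<le> 1 / (l * t)" using exp_minus_le_inv[of "l * t"] l t by simp
  have "norm (TL l t - 0) = exp (- l * t) * norm (\<theta> t)" by (simp add: norm_mult)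
  also have "\<dots> \<le> (1 / (l * t)) * (norm b0 + CL)" by (intro mult_mono e th) (use l t in auto)
  also have "\<dots> = ((norm b0 + CL) / l) * t powr (- 1)" using l t by (simp add: powr_minus_divide field_simps)
  finally show ?thesis .
qed

lemma deriv_theta:
  assumes N: "\<alpha> N > 0" and CN: "expand_ok \<theta> (XT N) CN (\<alpha> N)"
  shows "deriv (remove_sings (zeta1 \<theta> (\<alpha> 0))) 0 =
    (\<Sum>p\<leftarrow>XT N. fst p * Td (snd p)) + integral {0..1} (\<lambda>t. complex_of_real t powr (-1) * (\<theta> t - psum (XT N) t))"
proof -
  obtain C0 where C0: "\<forall>t. 0 < t \<longrightarrow> t \<le> 1 \<longrightarrow> norm (\<theta> t) \<le> C0 * t powr \<alpha> 0" using b0_theta by blast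
  show ?thesis by (rule zeta1_deriv[OF cont01 _ exps_theta CN N]) (use C0 in auto)
qed

lemma deriv_TL:
  assumes l: "0 < l" "l \<le> 1" and ex: "expand_ok (TL l) xs C 1"
  shows "deriv (remove_sings (zeta1 (TL l) (\<alpha> 0))) 0 =
    (\<Sum>p\<leftarrow>xs. fst p * Td (snd p)) + integral {0..1} (\<lambda>t. complex_of_real t powr (-1) * (TL l t - psum xs t))"
proof -
  obtain C0 where C0: "\<forall>t. 0 < t \<longrightarrow> t \<le> 1 \<longrightarrow> norm (TL l t) \<le> C0 * t powr \<alpha> 0" using TL_b0[of l] l by auto
  show ?thesis by (rule zeta1_deriv[OF TL_cont01 _ exps_TL[OF l] ex]) (use C0 in auto)
qed

lemma deriv2_theta:
  "deriv (zeta2 \<theta> b0) 0 = - b0 * euler_mascheroni + integral {1..} (\<lambda>t. of_real t powr (-1) * (\<theta> t - b0))"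
proof -
  obtain CL where CL: "CL \<ge> 0" "\<forall>t. 1 \<le> t \<longrightarrow> norm (\<theta> t - b0) \<le> CL * t powr (- \<rho>)" using large_bound by blast
  show ?thesis by (rule zeta2_deriv[OF cont1 _ rho_pos]) (use CL in auto)
qed

lemma deriv2_TL:
  assumes l: "0 < l"
  shows "deriv (zeta2 (TL l) 0) 0 = integral {1..} (\<lambda>t. of_real t powr (-1) * TL l t)"
proof -
  obtain CL where CL: "CL \<ge> 0" "\<forall>t. 1 \<le> t \<longrightarrow> norm (\<theta> t - b0) \<le> CL * t powr (- \<rho>)" using large_bound by blast
  have "deriv (zeta2 (TL l) 0) 0 = - 0 * euler_mascheroni + integral {1..} (\<lambda>t. of_real t powr (-1) * (TL l t - 0))"
    by (rule zeta2_deriv[OF TL_cont1 b0_TL_inf[OF l CL(1)] zero_less_one]) (use CL in auto)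
  then show ?thesis by simp
qed


lemma S_lim:
  assumes K: "K \<ge> 1"
  shows "((\<lambda>l. \<Sum>p\<leftarrow>xslam a \<alpha> l N K. fst p * Td (snd p)) \<longlongrightarrow> (\<Sum>p\<leftarrow>XT N. fst p * Td (snd p))) (at_right 0)"
proof -
  have eq1: "(\<Sum>p\<leftarrow>xslam a \<alpha> l N K. fst p * Td (snd p)) =
      (\<Sum>j<N. \<Sum>k<K. a j * (- of_real l) ^ k / fact k * Td (\<alpha> j + real k))" for l
    unfolding xslam_def by (subst sum_list_concat_upt) simp
  have eq2: "(\<Sum>p\<leftarrow>XT N. fst p * Td (snd p)) = (\<Sum>j<N. a j * Td (\<alpha> j))"
    by (simp add: o_def sum_list_upt_sum)
  obtain K' where K': "K = Suc K'" using K by (cases K) auto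
  have val: "(\<Sum>k<K. a j * (- of_real 0) ^ k / fact k * Td (\<alpha> j + real k)) = a j * Td (\<alpha> j)" for j
    unfolding K' by (subst sum.lessThan_Suc_shift) simp
  have "((\<lambda>l. \<Sum>j<N. \<Sum>k<K. a j * (- of_real l) ^ k / fact k * Td (\<alpha> j + real k)) \<longlongrightarrow>
      (\<Sum>j<N. \<Sum>k<K. a j * (- of_real 0) ^ k / fact k * Td (\<alpha> j + real k))) (at_right (0::real))"
    by (intro tendsto_intros tendsto_ident_at) auto
  then show ?thesis unfolding eq1 eq2 val .
qed

lemma I_lim:
  assumes K: "K \<ge> 1" "1 \<le> \<alpha> 0 + real K" and N: "1 \<le> \<alpha> N" and CN: "CN \<ge> 0" "expand_ok \<theta> (XT N) CN (\<alpha> N)"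
  shows "((\<lambda>l. integral {0..1} (\<lambda>t. complex_of_real t powr (-1) * (TL l t - psum (xslam a \<alpha> l N K) t))
            - integral {0..1} (\<lambda>t. complex_of_real t powr (-1) * (\<theta> t - psum (XT N) t))) \<longlongrightarrow> 0) (at_right 0)"
proof -
  define B where "B = CN + exp 1 * (\<Sum>j<N. norm (a j))"
  have ev: "eventually (\<lambda>l. norm (integral {0..1} (\<lambda>t. complex_of_real t powr (-1) * (TL l t - psum (xslam a \<alpha> l N K) t))
            - integral {0..1} (\<lambda>t. complex_of_real t powr (-1) * (\<theta> t - psum (XT N) t))) \<le> l * B) (at_right 0)"
    using eventually_at_right_real[OF zero_less_one]
  proof eventually_elim
    case (elim l)
    then have l: "0 < l" "l \<le> 1" by auto
    have exl: "expand_ok (TL l) (xslam a \<alpha> l N K) (CN + B) 1"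
      unfolding B_def by (rule lam_exp[OF l K(1) CN(2) CN(1) N K(2)])
    have i1: "(\<lambda>t. complex_of_real t powr (-1) * (TL l t - psum (xslam a \<alpha> l N K) t)) integrable_on {0..1}"
      by (rule m01_0(1)[OF rem_cont[OF TL_cont01] expand_okD[OF exl]]) auto
    have i2: "(\<lambda>t. complex_of_real t powr (-1) * (\<theta> t - psum (XT N) t)) integrable_on {0..1}"
      by (rule m01_0(1)[OF rem_cont[OF cont01] expand_okD[OF CN(2)]]) (use N in auto)
    have eq: "integral {0..1} (\<lambda>t. complex_of_real t powr (-1) * (TL l t - psum (xslam a \<alpha> l N K) t))
            - integral {0..1} (\<lambda>t. complex_of_real t powr (-1) * (\<theta> t - psum (XT N) t))
        = integral {0..1} (\<lambda>t. complex_of_real t powr (-1) * ((TL l t - psum (xslam a \<alpha> l N K) t) - (\<theta> t - psum (XT N) t)))"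
      by (subst integral_diff[OF i1 i2, symmetric]) (simp add: right_diff_distrib)
    have cD: "continuous_on {0<..1} (\<lambda>t. (TL l t - psum (xslam a \<alpha> l N K) t) - (\<theta> t - psum (XT N) t))"
      by (intro continuous_on_diff rem_cont TL_cont01 cont01)
    have bD: "norm ((TL l t - psum (xslam a \<alpha> l N K) t) - (\<theta> t - psum (XT N) t)) \<le> (l * B) * t powr 1"
      if "0 < t" "t \<le> 1" for t
      unfolding B_def by (rule lam_diff[OF l K(1) CN(2) CN(1) N K(2) that])
    have "norm (integral {0..1} (\<lambda>t. complex_of_real t powr (-1) * ((TL l t - psum (xslam a \<alpha> l N K) t) - (\<theta> t - psum (XT N) t))))
        \<le> (l * B) * (1 powr 1 / 1)"
      by (rule m01_0(2)[OF cD bD]) auto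
    then show ?case unfolding eq by simp
  qed
  have "((\<lambda>l. l * B) \<longlongrightarrow> 0 * B) (at_right 0)" by (intro tendsto_intros tendsto_ident_at)
  then show ?thesis by (intro Lim_null_comparison[OF ev]) simp
qed

lemma J_lim:
  "((\<lambda>l. integral {1..} (\<lambda>t. of_real t powr (-1) * TL l t)
        - integral {1..} (\<lambda>t. of_real t powr (-1) * (\<theta> t - b0))
        - b0 * integral {1..} (\<lambda>t. of_real t powr (-1) * complex_of_real (exp (- l * t)))) \<longlongrightarrow> 0) (at_right 0)"
proof -
  obtain CL where CL: "CL \<ge> 0" "\<And>t. 1 \<le> t \<Longrightarrow> norm (\<theta> t - b0) \<le> CL * t powr (- \<rho>)" using large_bound by blast
  define \<sigma> where "\<sigma> = min 1 (\<rho> / 2)"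
  have \<sigma>: "0 < \<sigma>" "\<sigma> \<le> 1" "\<rho> - \<sigma> > 0" using rho_pos unfolding \<sigma>_def by auto
  have cth: "continuous_on {1..} (\<lambda>t. \<theta> t - b0)" by (intro continuous_intros cont1)
  have ev: "eventually (\<lambda>l. norm (integral {1..} (\<lambda>t. of_real t powr (-1) * TL l t)
        - integral {1..} (\<lambda>t. of_real t powr (-1) * (\<theta> t - b0))
        - b0 * integral {1..} (\<lambda>t. of_real t powr (-1) * complex_of_real (exp (- l * t)))) \<le> l powr \<sigma> * CL / (\<rho> - \<sigma>)) (at_right 0)"
    using eventually_at_right_real[OF zero_less_one]
  proof eventually_elim
    case (elim l)
    then have l: "0 < l" "l < 1" by auto
    define R1 where "R1 = (\<lambda>t. (complex_of_real (exp (- l * t)) - 1) * (\<theta> t - b0))"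
    have cR1: "continuous_on {1..} R1" unfolding R1_def by (intro continuous_intros cont1)
    have bR1: "norm (R1 t) \<le> (l powr \<sigma> * CL) * t powr (- (\<rho> - \<sigma>))" if t: "1 \<le> t" for t
    proof -
      have nE: "norm (complex_of_real (exp (- l * t)) - 1) = \<bar>exp (- l * t) - 1\<bar>"
        by (metis norm_of_real of_real_1 of_real_diff)
      have "norm (R1 t) = \<bar>exp (- (l * t)) - 1\<bar> * norm (\<theta> t - b0)"
        unfolding R1_def norm_mult nE by simp
      also have "\<dots> \<le> (l * t) powr \<sigma> * (CL * t powr (- \<rho>))"
        by (intro mult_mono expm1_powr_bound CL(2) t \<sigma>) (use l t in auto)
      also have "\<dots> = (l powr \<sigma> * CL) * t powr (- (\<rho> - \<sigma>))"
        using l t by (simp add: powr_mult powr_add[symmetric] algebra_simps)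
      finally show ?thesis .
    qed
    have cE: "continuous_on {1..} (\<lambda>t. complex_of_real (exp (- l * t)))" by (intro continuous_intros)
    have bE: "norm (complex_of_real (exp (- l * t))) \<le> (1 / l) * t powr (- 1)" if "1 \<le> t" for t
      using bnd_exp_inf[of l t] that l by simp
    have i1: "(\<lambda>t. of_real t powr (-1) * R1 t) integrable_on {1..}" by (rule m1inf0(1)[OF cR1 bR1 \<sigma>(3)]) auto
    have i2: "(\<lambda>t. of_real t powr (-1) * (\<theta> t - b0)) integrable_on {1..}" by (rule m1inf0(1)[OF cth CL(2) rho_pos]) auto
    have i3: "(\<lambda>t. of_real t powr (-1) * complex_of_real (exp (- l * t))) integrable_on {1..}"
      by (rule m1inf0(1)[OF cE bE zero_less_one]) auto
    have "integral {1..} (\<lambda>t. of_real t powr (-1) * TL l t)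
        = integral {1..} (\<lambda>t. (of_real t powr (-1) * R1 t + of_real t powr (-1) * (\<theta> t - b0))
             + b0 * (of_real t powr (-1) * complex_of_real (exp (- l * t))))"
      unfolding R1_def by (rule integral_cong) (simp add: algebra_simps)
    also have "\<dots> = integral {1..} (\<lambda>t. of_real t powr (-1) * R1 t) + integral {1..} (\<lambda>t. of_real t powr (-1) * (\<theta> t - b0))
        + b0 * integral {1..} (\<lambda>t. of_real t powr (-1) * complex_of_real (exp (- l * t)))"
    proof -
      have m3: "integral {1..} (\<lambda>t. b0 * (of_real t powr (-1) * complex_of_real (exp (- l * t))))
          = b0 * integral {1..} (\<lambda>t. of_real t powr (-1) * complex_of_real (exp (- l * t)))"
        by (rule integral_unique[OF has_integral_mult_right[OF integrable_integral[OF i3]]])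
      show ?thesis
        by (simp only: integral_add[OF integrable_add[OF i1 i2] integrable_on_mult_right[OF i3]] integral_add[OF i1 i2] m3)
    qed
    finally have eq: "integral {1..} (\<lambda>t. of_real t powr (-1) * TL l t)
        - integral {1..} (\<lambda>t. of_real t powr (-1) * (\<theta> t - b0))
        - b0 * integral {1..} (\<lambda>t. of_real t powr (-1) * complex_of_real (exp (- l * t)))
        = integral {1..} (\<lambda>t. of_real t powr (-1) * R1 t)" by simp
    have "norm (integral {1..} (\<lambda>t. of_real t powr (-1) * R1 t)) \<le> (l powr \<sigma> * CL) * (1 powr (- (\<rho> - \<sigma>)) / (\<rho> - \<sigma>))"
      by (rule m1inf0(2)[OF cR1 bR1 \<sigma>(3)]) auto
    then show ?case unfolding eq by simp
  qed
  have "((\<lambda>l. l powr \<sigma> * CL / (\<rho> - \<sigma>)) \<longlongrightarrow> 0 * CL / (\<rho> - \<sigma>)) (at_right 0)"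
    by (intro tendsto_intros tendsto_zero_powrI[OF tendsto_ident_at tendsto_const] \<sigma>)
       (use \<sigma> in \<open>auto simp: eventually_at_right_less intro: eventually_mono[OF eventually_at_right_less]\<close>)
  then show ?thesis by (intro Lim_null_comparison[OF ev]) simp
qed


lemma main_lim:
  "((\<lambda>l. logdet (\<lambda>t. complex_of_real (exp (- l * t)) * \<theta> t) (\<alpha> 0) 0
                 - b0 * complex_of_real (ln l) - logdet \<theta> (\<alpha> 0) b0) \<longlongrightarrow> 0) (at_right 0)"
proof -
  obtain N where N: "\<alpha> N \<ge> 1" using alpha_big by blast
  obtain CN where CN: "CN \<ge> 0" "expand_ok \<theta> (XT N) CN (\<alpha> N)" using exp_theta by blast
  define K where "K = nat \<lceil>1 - \<alpha> 0\<rceil> + 1"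
  have K: "K \<ge> 1" "1 \<le> \<alpha> 0 + real K" unfolding K_def by linarith+
  define S where "S = (\<Sum>p\<leftarrow>XT N. fst p * Td (snd p))"
  define I where "I = integral {0..1} (\<lambda>t. complex_of_real t powr (-1) * (\<theta> t - psum (XT N) t))"
  define J where "J = integral {1..} (\<lambda>t. of_real t powr (-1) * (\<theta> t - b0))"
  define Sl where "Sl = (\<lambda>l. \<Sum>p\<leftarrow>xslam a \<alpha> l N K. fst p * Td (snd p))"
  define Il where "Il = (\<lambda>l. integral {0..1} (\<lambda>t. complex_of_real t powr (-1) * (TL l t - psum (xslam a \<alpha> l N K) t)))"
  define Jl where "Jl = (\<lambda>l. integral {1..} (\<lambda>t. of_real t powr (-1) * TL l t))"
  define E where "E = (\<lambda>l. integral {1..} (\<lambda>t. of_real t powr (-1) * complex_of_real (exp (- l * t))))"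
  have Ld: "logdet \<theta> (\<alpha> 0) b0 = - (S + I + (- b0 * euler_mascheroni + J))"
  proof -
    have N0: "\<alpha> N > 0" using N by simp
    show ?thesis unfolding logdet_def deriv_theta[OF N0 CN(2)] deriv2_theta S_def I_def J_def by simp
  qed
  have ev: "eventually (\<lambda>l. logdet (\<lambda>t. complex_of_real (exp (- l * t)) * \<theta> t) (\<alpha> 0) 0
                 - b0 * complex_of_real (ln l) - logdet \<theta> (\<alpha> 0) b0
         = - (Sl l - S) - (Il l - I) - (Jl l - J - b0 * E l) - b0 * (E l + of_real (ln l) + euler_mascheroni)) (at_right 0)"
    using eventually_at_right_real[OF zero_less_one]
  proof eventually_elim
    case (elim l)
    then have l: "0 < l" "l \<le> 1" by auto
    have exl: "expand_ok (TL l) (xslam a \<alpha> l N K) (CN + (CN + exp 1 * (\<Sum>j<N. norm (a j)))) 1"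
      by (rule lam_exp[OF l K(1) CN(2) CN(1) N K(2)])
    have "logdet (TL l) (\<alpha> 0) 0 = - (Sl l + Il l + Jl l)"
      unfolding logdet_def deriv_TL[OF l exl] deriv2_TL[OF l(1)] Sl_def Il_def Jl_def by simp
    then show ?case unfolding Ld by (simp add: algebra_simps)
  qed
  have t1: "((\<lambda>l. Sl l - S) \<longlongrightarrow> S - S) (at_right 0)"
    unfolding Sl_def S_def by (intro tendsto_diff S_lim[OF K(1)] tendsto_const)
  have t2: "((\<lambda>l. Il l - I) \<longlongrightarrow> 0) (at_right 0)"
    unfolding Il_def I_def by (rule I_lim[OF K(1) K(2) N CN])
  have t3: "((\<lambda>l. Jl l - J - b0 * E l) \<longlongrightarrow> 0) (at_right 0)"
    unfolding Jl_def J_def E_def by (rule J_lim)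
  have t4: "((\<lambda>l. b0 * (E l + of_real (ln l) + euler_mascheroni)) \<longlongrightarrow> b0 * (- euler_mascheroni + euler_mascheroni)) (at_right 0)"
    unfolding E_def by (intro tendsto_intros E1_lim)
  have "((\<lambda>l. - (Sl l - S) - (Il l - I) - (Jl l - J - b0 * E l) - b0 * (E l + of_real (ln l) + euler_mascheroni))
      \<longlongrightarrow> - (S - S) - 0 - 0 - b0 * (- euler_mascheroni + euler_mascheroni)) (at_right 0)"
    by (intro tendsto_intros t1 t2 t3 t4)
  then have "((\<lambda>l. - (Sl l - S) - (Il l - I) - (Jl l - J - b0 * E l) - b0 * (E l + of_real (ln l) + euler_mascheroni))
      \<longlongrightarrow> 0) (at_right 0)" by simp
  then show ?thesis by (rule Lim_transform_eventually) (rule eventually_mono[OF ev], simp)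
qed

end

theorem proposition2p1:
  fixes \<theta> :: "real \<Rightarrow> complex" and a :: "nat \<Rightarrow> complex" and \<alpha> :: "nat \<Rightarrow> real"
    and b0 :: complex and \<rho> :: real
  assumes cont: "continuous_on {0<..} \<theta>"
    and mono: "strict_mono \<alpha>"
    and unbounded: "filterlim \<alpha> at_top sequentially"
    and small_t: "\<And>N. (\<lambda>t. norm (\<theta> t - (\<Sum>j<N. a j * complex_of_real (t powr \<alpha> j))))
                        \<in> O[at_right 0](\<lambda>t. t powr \<alpha> N)"
    and rho_pos: "\<rho> > 0"
    and large_t: "(\<lambda>t. norm (\<theta> t - b0)) \<in> O[at_top](\<lambda>t. t powr (- \<rho>))"
  shows "((\<lambda>l. logdet (\<lambda>t. complex_of_real (exp (- l * t)) * \<theta> t) (\<alpha> 0) 0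
                 - b0 * complex_of_real (ln l) - logdet \<theta> (\<alpha> 0) b0) \<longlongrightarrow> 0) (at_right 0)"
proof -
  have "setting \<theta> a \<alpha> b0 \<rho>" unfolding setting_def using assms by blast
  then show ?thesis by (rule setting.main_lim)
qed

end
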